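(* Let $G\subset\mathbb{K}[\mathbf{x}][\boldsymbol{\partial}]$ be a finite set. Then the indicial ideal $\mathrm{ind}(G)=\{\mathrm{ind}(P): P\in\mathbb{K}(\mathbf{x})[\boldsymbol{\partial}]G\cap\mathbb{K}[\mathbf{x}][\boldsymbol{\partial}]\}$ is an ideal of $\mathbb{K}[y_1,\dots,y_n]$.
   Context: $\mathbb{K}$ is a field of characteristic zero; $\mathbb{K}(\mathbf{x})[\boldsymbol{\partial}]$ and $\mathbb{K}[\mathbf{x}][\boldsymbol{\partial}]$ are the rings of partial differential operators in $\partial_1,\dots,\partial_n$ with rational, resp. polynomial, coefficients in $x_1,\dots,x_n$; $\mathbb{K}(\mathbf{x})[\boldsymbol{\partial}]G$ is the left ideal generated by $G$. $\prec$ is a fixed graded term order on $\mathbb{N}^n$, applied to monomials $\mathbf{x}^{\mathbf{u}}$. Indicial polynomial: let $\delta_i=x_i\partial_i$. For nonzero $P=\sum_{|\mathbf{u}|\le m}c_{\mathbf{u}}\boldsymbol{\partial}^{\mathbf{u}}\in\mathbb{K}[\mathbf{x}][\boldsymbol{\partial}]$ of order $m$ (some $c_{\mathbf{u}}\ne0$ with $|\mathbf{u}|=m$), with $\mathbf{m}=(m,\dots,m)$ write uniquely $\mathbf{x}^{\mathbf{m}}P=\sum_{\mathbf{v}\in T}\mathbf{x}^{\mathbf{v}}\big(\sum_{|\mathbf{u}|\le m}c_{\mathbf{u},\mathbf{v}}\boldsymbol{\delta}^{\mathbf{u}}\big)$ with $c_{\mathbf{u},\mathbf{v}}\in\mathbb{K}$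 and nonzero inner sums; with $\mathbf{v}_0$ the $\prec$-minimal element of $T$, $\mathrm{ind}(P)=\sum_{|\mathbf{u}|\le m}c_{\mathbf{u},\mathbf{v}_0}\mathbf{y}^{\mathbf{u}}$; $\mathrm{ind}(0)=0$. *)

theory Defs
  imports "HOL-Library.Poly_Mapping" "HOL-Computational_Algebra.Fraction_Field"
begin

(* 
  The variables x_1..x_n are indexed by a finite linearly ordered type 'v
  (so n = CARD('v)).
  K[x] (and K[y]) is  ('v \<Rightarrow>_0 nat) \<Rightarrow>_0 'k, and K(x) is its fraction field.
  A differential operator with coefficients in a ring 'c is a finitely supported map
  from \<partial>-exponents to coefficients:  P = \<Sum>_u (Poly_Mapping.lookup P u) \<partial>^u  (coefficients on the left).
 *)

type_synonym 'v mon = "'v \<Rightarrow>\<^sub>0 nat"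
type_synonym ('v, 'k) mpoly = "'v mon \<Rightarrow>\<^sub>0 'k"
type_synonym ('v, 'c) dop = "'v mon \<Rightarrow>\<^sub>0 'c"

definition tdeg :: "'v mon \<Rightarrow> nat" where
  "tdeg u = (\<Sum>i\<in>Poly_Mapping.keys u. Poly_Mapping.lookup u i)"

definition mp_deriv :: "'v \<Rightarrow> ('v, 'k::comm_ring_1) mpoly \<Rightarrow> ('v, 'k) mpoly" where
  "mp_deriv i p = (\<Sum>m\<in>Poly_Mapping.keys p. Poly_Mapping.single (m - Poly_Mapping.single i 1)
                                   (of_nat (Poly_Mapping.lookup m i) * Poly_Mapping.lookup p m))"

definition rf_deriv :: "'v::{finite,linorder} \<Rightarrow> ('v, 'k::field_char_0) mpoly fract \<Rightarrow> ('v, 'k) mpoly fract" where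
  "rf_deriv i q = (THE r. \<forall>a b. b \<noteq> 0 \<longrightarrow> q = Fract a b \<longrightarrow>
       r = Fract (mp_deriv i a * b - a * mp_deriv i b) (b * b))"

(* Iterated derivation D^w = \<Prod>_i D_i^(w_i) (the D_i commute). *)
definition Dpow :: "('v::{finite,linorder} \<Rightarrow> 'c \<Rightarrow> 'c) \<Rightarrow> 'v mon \<Rightarrow> 'c \<Rightarrow> 'c" where
  "Dpow D w c = fold (\<lambda>i b. (D i ^^ Poly_Mapping.lookup w i) b) (sorted_list_of_set (UNIV :: 'v set)) c"

definition mbinom :: "'v::finite mon \<Rightarrow> 'v mon \<Rightarrow> nat" where
  "mbinom u w = (\<Prod>i\<in>UNIV. Poly_Mapping.lookup u i choose Poly_Mapping.lookup w i)"

(* Multiplication of differential operators over a coefficient ring with derivations D,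
  via the Leibniz rule  (a \<partial>^u)(b \<partial>^v) = \<Sum>_{w\<le>u} binom(u,w) a D^w(b) \<partial>^(u-w+v). *)
definition dop_mult :: "('v::{finite,linorder} \<Rightarrow> 'c \<Rightarrow> 'c) \<Rightarrow> ('v, 'c::comm_ring_1) dop \<Rightarrow> ('v, 'c) dop \<Rightarrow> ('v, 'c) dop" where
  "dop_mult D P Q = (\<Sum>u\<in>Poly_Mapping.keys P. \<Sum>v\<in>Poly_Mapping.keys Q. \<Sum>w\<in>{w. \<forall>i. Poly_Mapping.lookup w i \<le> Poly_Mapping.lookup u i}.
      Poly_Mapping.single (u - w + v)
        (of_nat (mbinom u w) * Poly_Mapping.lookup P u * Dpow D w (Poly_Mapping.lookup Q v)))"

definition dop_embed :: "('v::{finite,linorder}, ('v, 'k::field_char_0) mpoly) dop \<Rightarrow> ('v, ('v, 'k) mpoly fract) dop" where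
  "dop_embed P = Poly_Mapping.map (\<lambda>c. Fract c 1) P"

definition rat_left_ideal :: "('v::{finite,linorder}, ('v, 'k::field_char_0) mpoly) dop set \<Rightarrow> ('v, ('v, 'k) mpoly fract) dop set" where
  "rat_left_ideal G = {P. \<exists>S Q. finite S \<and> S \<subseteq> G \<and>
       P = (\<Sum>g\<in>S. dop_mult rf_deriv (Q g) (dop_embed g))}"

(* Operators of K[x][\<partial>]: multiplication, the Euler operators \<delta>_i = x_i \<partial>_i, x^v, \<delta>^u. *)
abbreviation pmult :: "('v::{finite,linorder}, ('v, 'k::field_char_0) mpoly) dop \<Rightarrow> _ \<Rightarrow> _" where
  "pmult \<equiv> dop_mult mp_deriv"

definition dop_xmon :: "'v::{finite,linorder} mon \<Rightarrow> ('v, ('v, 'k::field_char_0) mpoly) dop" where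
  "dop_xmon v = Poly_Mapping.single 0 (Poly_Mapping.single v 1)"

definition euler :: "'v::{finite,linorder} \<Rightarrow> ('v, ('v, 'k::field_char_0) mpoly) dop" where
  "euler i = Poly_Mapping.single (Poly_Mapping.single i 1) (Poly_Mapping.single (Poly_Mapping.single i 1) 1)"

definition delta_pow :: "'v::{finite,linorder} mon \<Rightarrow> ('v, ('v, 'k::field_char_0) mpoly) dop" where
  "delta_pow u = fold (\<lambda>i R. pmult ((pmult (euler i) ^^ Poly_Mapping.lookup u i) 1) R)
                      (sorted_list_of_set (UNIV :: 'v set)) 1"

definition dop_order :: "('v, 'c::zero) dop \<Rightarrow> nat" where
  "dop_order P = Max (tdeg ` Poly_Mapping.keys P)"

definition const_mon :: "nat \<Rightarrow> 'v::finite mon" where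
  "const_mon m = (\<Sum>i\<in>UNIV. Poly_Mapping.single i m)"

(* The unique coefficients c_{u,v} with  x^m P = \<Sum>_v x^v (\<Sum>_{|u|\<le>m} c_{u,v} \<delta>^u),
  stored as  c v u. *)
definition ind_coeffs :: "('v::{finite,linorder}, ('v, 'k::field_char_0) mpoly) dop \<Rightarrow> 'v mon \<Rightarrow> 'v mon \<Rightarrow> 'k" where
  "ind_coeffs P = (THE c. finite {(v, u). c v u \<noteq> 0} \<and>
      (\<forall>v u. c v u \<noteq> 0 \<longrightarrow> tdeg u \<le> dop_order P) \<and>
      pmult (dop_xmon (const_mon (dop_order P))) P =
        (\<Sum>(v, u)\<in>{(v, u). c v u \<noteq> 0}.
           pmult (dop_xmon v) (Poly_Mapping.map (\<lambda>a. Poly_Mapping.single 0 (c v u) * a) (delta_pow u))))"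

definition graded_term_order :: "('v mon \<Rightarrow> 'v mon \<Rightarrow> bool) \<Rightarrow> bool" where
  "graded_term_order ord \<longleftrightarrow>
     (\<forall>a. \<not> ord a a) \<and> (\<forall>a b c. ord a b \<longrightarrow> ord b c \<longrightarrow> ord a c) \<and>
     (\<forall>a b. a = b \<or> ord a b \<or> ord b a) \<and>
     (\<forall>a. a \<noteq> 0 \<longrightarrow> ord 0 a) \<and>
     (\<forall>a b c. ord a b \<longrightarrow> ord (a + c) (b + c)) \<and>
     (\<forall>a b. tdeg a < tdeg b \<longrightarrow> ord a b)"

definition ind :: "('v::{finite,linorder} mon \<Rightarrow> 'v mon \<Rightarrow> bool) \<Rightarrow>
    ('v, ('v, 'k::field_char_0) mpoly) dop \<Rightarrow> ('v, 'k) mpoly" where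
  "ind ord P = (if P = 0 then 0 else
     (let c = ind_coeffs P;
          T = {v. \<exists>u. c v u \<noteq> 0};
          v0 = (THE v0. v0 \<in> T \<and> (\<forall>v\<in>T. v \<noteq> v0 \<longrightarrow> ord v0 v))
      in (\<Sum>u\<in>{u. c v0 u \<noteq> 0}. Poly_Mapping.single u (c v0 u))))"

definition is_ideal :: "'a::comm_ring_1 set \<Rightarrow> bool" where
  "is_ideal I \<longleftrightarrow> 0 \<in> I \<and> (\<forall>a\<in>I. \<forall>b\<in>I. a + b \<in> I) \<and> (\<forall>r a. a \<in> I \<longrightarrow> r * a \<in> I)"

end

theory Submission
  imports Defs
begin

abbreviation lk :: "('a \<Rightarrow>\<^sub>0 'b::zero) \<Rightarrow> 'a \<Rightarrow> 'b" where "lk \<equiv> Poly_Mapping.lookup"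
abbreviation sng :: "'a \<Rightarrow> 'b \<Rightarrow> ('a \<Rightarrow>\<^sub>0 'b::zero)" where "sng \<equiv> Poly_Mapping.single"
abbreviation ks :: "('a \<Rightarrow>\<^sub>0 'b::zero) \<Rightarrow> 'a set" where "ks \<equiv> Poly_Mapping.keys"

definition ev :: "'v \<Rightarrow> 'v mon" where "ev i = sng i 1"

lemma lk_ev: "lk (ev i) j = (if i = j then 1 else 0)"
  by (simp add: ev_def lookup_single when_def)

definition Wset :: "'v mon \<Rightarrow> 'v mon set" where
  "Wset u = {w. \<forall>i. lk w i \<le> lk u i}"

lemma finite_Wset: "finite (Wset (u :: ('v::finite) mon))"
proof -
  let ?M = "Max (range (lk u))"
  have "lk ` Wset u \<subseteq> {f. \<forall>x. (x \<in> UNIV \<longrightarrow> f x \<in> {0..?M}) \<and> (x \<notin> UNIV \<longrightarrow> f x = 0)}"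
  proof (intro subsetI CollectI allI)
    fix f x assume "f \<in> lk ` Wset u"
    then obtain w where w: "w \<in> Wset u" "f = lk w" by blast
    have "lk u x \<le> ?M" by (rule Max_ge) auto
    then show "(x \<in> UNIV \<longrightarrow> f x \<in> {0..?M}) \<and> (x \<notin> UNIV \<longrightarrow> f x = 0)"
      using w by (auto simp: Wset_def intro: le_trans)
  qed
  then have "finite (lk ` Wset u)"
    by (rule finite_subset) (rule finite_set_of_finite_funs, auto)
  then show ?thesis
    by (rule finite_imageD) (simp add: inj_on_def poly_mapping.lookup_inject)
qed

lemma mon_eqI: "(\<And>k. lk (f::'v mon) k = lk g k) \<Longrightarrow> f = g"
  by (rule poly_mapping_eqI)

definition cm :: "'c::comm_ring_1 \<Rightarrow> ('a \<Rightarrow>\<^sub>0 'c) \<Rightarrow> ('a \<Rightarrow>\<^sub>0 'c)" where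
  "cm q R = Poly_Mapping.map (\<lambda>a. q * a) R"

lemma lk_cm [simp]: "lk (cm q R) k = q * lk R k"
  by (simp add: cm_def map.rep_eq when_def)

lemma cm_add: "cm q (R + S) = cm q R + cm q S"
  by (rule poly_mapping_eqI) (simp add: lookup_add algebra_simps)
lemma cm_add_left: "cm (q + r) S = cm q S + cm r S"
  by (rule poly_mapping_eqI) (simp add: lookup_add algebra_simps)
lemma cm_zero [simp]: "cm q 0 = 0"
  by (rule poly_mapping_eqI) simp
lemma cm_zero_left [simp]: "cm 0 R = 0"
  by (rule poly_mapping_eqI) simp
lemma cm_one [simp]: "cm 1 R = R"
  by (rule poly_mapping_eqI) simp
lemma cm_cm: "cm q (cm r R) = cm (q * r) R"
  by (rule poly_mapping_eqI) (simp add: algebra_simps)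
lemma cm_sum: "cm q (sum f A) = sum (\<lambda>x. cm q (f x)) A"
  by (rule poly_mapping_eqI) (simp add: lookup_sum sum_distrib_left)
lemma cm_sng: "cm q (sng k c) = sng k (q * c)"
  by (rule poly_mapping_eqI) (simp add: lookup_single when_def)
lemma cm_minus: "cm q (R - S) = cm q R - cm q S"
  by (rule poly_mapping_eqI) (simp add: lookup_minus algebra_simps)
lemma cm_uminus_left: "cm (- q) R = - cm q R"
  by (rule poly_mapping_eqI) (simp)
lemma ks_cm: "ks (cm q R) \<subseteq> ks R"
  by (auto simp: in_keys_iff)

lemma pm_sum_single: "(P::'a \<Rightarrow>\<^sub>0 'b::comm_monoid_add) = (\<Sum>u\<in>ks P. sng u (lk P u))"
  by (rule poly_mapping_eqI) (auto simp: lookup_sum lookup_single when_def in_keys_iff)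

lemma pm_sum_single_sup: "finite A \<Longrightarrow> ks P \<subseteq> A \<Longrightarrow> (P::'a \<Rightarrow>\<^sub>0 'b::comm_monoid_add) = (\<Sum>u\<in>A. sng u (lk P u))"
  apply (subst pm_sum_single)
  apply (rule sum.mono_neutral_left)
  apply (auto simp: in_keys_iff)
  done

lemma fold_funpow_add:
  assumes "\<And>i a b. D i (a + b) = D i a + D i b"
  shows "fold (\<lambda>i b. (D i ^^ f i) b) xs (a + b) = fold (\<lambda>i b. (D i ^^ f i) b) xs a + fold (\<lambda>i b. (D i ^^ f i) b) xs b"
proof (induction xs arbitrary: a b)
  case Nil then show ?case by simp
next
  case (Cons x xs)
  have "(D x ^^ n) (a + b) = (D x ^^ n) a + (D x ^^ n) b" for n a b
    by (induction n) (auto simp: assms)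
  then show ?case using Cons by simp
qed

lemma fold_funpow_comm:
  assumes "\<And>i a. D i (D j a) = D j (D i a)"
  shows "D j (fold (\<lambda>i b. (D i ^^ f i) b) xs c) = fold (\<lambda>i b. (D i ^^ f i) b) xs (D j c)"
proof (induction xs arbitrary: c)
  case Nil then show ?case by simp
next
  case (Cons x xs)
  have "D j ((D x ^^ n) c) = (D x ^^ n) (D j c)" for n c
    by (induction n) (simp_all, metis assms)
  then show ?case using Cons by simp
qed

lemma fold_funpow_ev:
  assumes "\<And>i j a. D i (D j a) = D j (D i a)" "distinct xs" "j \<in> set xs"
  shows "fold (\<lambda>i b. (D i ^^ lk (w + ev j) i) b) xs c = D j (fold (\<lambda>i b. (D i ^^ lk w i) b) xs c)"
  using assms(2,3)
proof (induction xs arbitrary: c)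
  case Nil then show ?case by simp
next
  case (Cons x xs)
  show ?case
  proof (cases "x = j")
    case True
    with Cons have nj: "j \<notin> set xs" by auto
    have "fold (\<lambda>i b. (D i ^^ lk (w + ev j) i) b) xs c' = fold (\<lambda>i b. (D i ^^ lk w i) b) xs c'" for c'
      by (rule fold_cong) (use nj in \<open>auto simp: lookup_add lk_ev\<close>)
    then show ?thesis using True
      by (simp add: lookup_add lk_ev fold_funpow_comm assms(1))
  next
    case False
    with Cons have "j \<in> set xs" "distinct xs" by auto
    then show ?thesis using Cons False by (simp add: lookup_add lk_ev)
  qed
qed

lemma Dpow_ev:
  assumes "\<And>i j a. D i (D j a) = D j (D i a)"
  shows "Dpow D (w + ev j) c = D j (Dpow D w c)"
  unfolding Dpow_def by (rule fold_funpow_ev) (auto simp: assms)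

lemma Dpow_zero_mon [simp]: "Dpow D 0 c = c"
  unfolding Dpow_def by (simp add: fold_id)

lemma Dpow_add:
  assumes "\<And>i a b. D i (a + b) = D i a + D i b"
  shows "Dpow D w (a + b) = Dpow D w a + Dpow D w b"
  unfolding Dpow_def by (rule fold_funpow_add) (simp add: assms)

lemma mbinom_split: "mbinom u w = (lk u i choose lk w i) * (\<Prod>j\<in>UNIV-{i}. lk u j choose lk w j)"
  unfolding mbinom_def by (subst prod.remove[of UNIV i]) auto

lemma mbinom_pascal:
  "mbinom (u + ev i) w = mbinom u w + (if 0 < lk w i then mbinom u (w - ev i) else 0)"
proof -
  have A: "(\<Prod>j\<in>UNIV-{i}. lk (u + ev i) j choose lk w j) = (\<Prod>j\<in>UNIV-{i}. lk u j choose lk w j)"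
    by (rule prod.cong) (auto simp: lookup_add lk_ev)
  have B: "(\<Prod>j\<in>UNIV-{i}. lk u j choose lk (w - ev i) j) = (\<Prod>j\<in>UNIV-{i}. lk u j choose lk w j)"
    by (rule prod.cong) (auto simp: lookup_minus lk_ev)
  show ?thesis
  proof (cases "lk w i")
    case 0 then show ?thesis
      by (simp add: mbinom_split[of _ _ i] A lookup_add lk_ev)
  next
    case (Suc k)
    have C: "lk (u + ev i) i = Suc (lk u i)" "lk (w - ev i) i = k"
      using Suc by (simp_all add: lookup_add lookup_minus lk_ev)
    have "mbinom (u + ev i) w = (Suc (lk u i) choose Suc k) * (\<Prod>j\<in>UNIV-{i}. lk u j choose lk w j)"
      using mbinom_split[of "u + ev i" w i] A C Suc by simp
    also have "\<dots> = mbinom u w + mbinom u (w - ev i)"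
      using mbinom_split[of u w i] mbinom_split[of u "w - ev i" i] B C Suc
      by (simp add: add_mult_distrib)
    finally show ?thesis using Suc by simp
  qed
qed

lemma mbinom_zero: "w \<notin> Wset u \<Longrightarrow> mbinom u w = 0"
  unfolding mbinom_def Wset_def
  by (auto simp: not_le intro!: prod_zero)

lemma Wset_ev: "Wset (ev i) = {0, ev i}"
proof -
  have "w = 0 \<or> w = ev i" if "w \<in> Wset (ev i)" for w
  proof (cases "lk w i = 0")
    case True
    have "w = 0" using that True
      by (intro poly_mapping_eqI) (force simp: Wset_def lk_ev split: if_splits)
    then show ?thesis ..
  next
    case False
    have "w = ev i" using that False
    proof (intro poly_mapping_eqI)
      fix k
      have "lk w k \<le> lk (ev i) k" using that by (simp add: Wset_def)
      then show "lk w k = lk (ev i) k" using False by (auto simp: lk_ev split: if_splits)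
    qed
    then show ?thesis ..
  qed
  then have "Wset (ev i) \<subseteq> {0, ev i}" by blast
  moreover have "{0, ev i} \<subseteq> Wset (ev i)" by (auto simp: Wset_def lk_ev)
  ultimately show ?thesis by blast
qed

lemma ev_neq0 [simp]: "ev i \<noteq> 0" "0 \<noteq> ev i"
  by (metis ev_def lookup_single_eq lookup_zero one_neq_zero)+

lemma mbinom_same: "mbinom u u = 1"
  by (simp add: mbinom_def)
lemma mbinom_0: "mbinom u 0 = 1"
  by (simp add: mbinom_def)

lemma mon_m1: assumes "w \<in> Wset u" shows "u + ev i - w + v = ev i + (u - w + v)"
proof (rule poly_mapping_eqI)
  fix k
  have "lk w k \<le> lk u k" using assms by (simp add: Wset_def)
  then show "lk (u + ev i - w + v) k = lk (ev i + (u - w + v)) k"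
    by (simp add: lookup_add lookup_minus lk_ev)
qed
lemma mon_m2: "u + ev i - (w + ev i) + v = u - w + v"
  by simp
lemma mon_m3: "0 < lk w i \<Longrightarrow> w - ev i + ev i = w"
  by (rule poly_mapping_eqI) (auto simp: lookup_add lookup_minus lk_ev)

lemma bij_Wset_ev: "bij_betw (\<lambda>w. w + ev i) (Wset u) {w\<in>Wset (u + ev i). 0 < lk w i}"
proof (rule bij_betw_imageI)
  show "inj_on (\<lambda>w. w + ev i) (Wset u)" by (auto simp: inj_on_def)
  show "(\<lambda>w. w + ev i) ` Wset u = {w \<in> Wset (u + ev i). 0 < lk w i}"
  proof (intro equalityI subsetI)
    fix x assume "x \<in> (\<lambda>w. w + ev i) ` Wset u"
    then show "x \<in> {w \<in> Wset (u + ev i). 0 < lk w i}"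
      by (auto simp: Wset_def lookup_add lk_ev add_mono)
  next
    fix x assume x: "x \<in> {w \<in> Wset (u + ev i). 0 < lk w i}"
    have "x - ev i \<in> Wset u" unfolding Wset_def
    proof (intro CollectI allI)
      fix k
      have "lk x k \<le> lk (u + ev i) k" using x by (simp add: Wset_def)
      then show "lk (x - ev i) k \<le> lk u k"
        by (auto simp: lookup_add lookup_minus lk_ev split: if_splits)
    qed
    moreover have "x = (x - ev i) + ev i" using x mon_m3[of x i] by simp
    ultimately show "x \<in> (\<lambda>w. w + ev i) ` Wset u" by blast
  qed
qed

lemma Wset_sub: "Wset u \<subseteq> Wset (u + ev i)"
  by (auto simp: Wset_def lookup_add intro: trans_le_add1)



lemma ev_add_eq: "ev i + v = w \<longleftrightarrow> 0 < lk w i \<and> v = w - ev i"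
proof
  assume "ev i + v = w"
  then show "0 < lk w i \<and> v = w - ev i" by (auto simp: lookup_add lk_ev)
next
  assume "0 < lk w i \<and> v = w - ev i"
  then show "ev i + v = w" using mon_m3[of w i] by (simp add: add.commute)
qed

lemma tdeg_UNIV: "tdeg (u :: 'v::finite mon) = (\<Sum>i\<in>UNIV. lk u i)"
  unfolding tdeg_def by (rule sum.mono_neutral_left) (auto simp: in_keys_iff)

lemma tdeg_ev: "tdeg (u + ev j :: 'v::finite mon) = Suc (tdeg u)"
proof -
  have "(\<Sum>i\<in>UNIV. lk (u + ev j) i) = (\<Sum>i\<in>UNIV. lk u i + lk (ev j) i)"
    by (simp add: lookup_add)
  also have "\<dots> = (\<Sum>i\<in>UNIV. lk u i) + 1"
    by (simp add: sum.distrib lk_ev)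
  finally show ?thesis by (simp add: tdeg_UNIV)
qed

lemma tdeg_Wset: "w \<in> Wset u \<Longrightarrow> tdeg (w :: 'v::finite mon) \<le> tdeg u"
  unfolding tdeg_UNIV Wset_def by (auto intro: sum_mono)

lemma tdeg_Wset_less: assumes "w \<in> Wset u" "w \<noteq> u" shows "tdeg (w :: 'v::finite mon) < tdeg u"
proof -
  obtain k where "lk w k \<noteq> lk u k" using assms(2) poly_mapping_eqI by metis
  then have "lk w k < lk u k" using assms(1) by (simp add: Wset_def le_neq_implies_less)
  then show ?thesis unfolding tdeg_UNIV using assms(1)
    by (intro sum_strict_mono_ex1) (auto simp: Wset_def)
qed

lemma lk_le_tdeg: "lk (u :: 'v::finite mon) i \<le> tdeg u"
  unfolding tdeg_UNIV by (rule member_le_sum) auto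

lemma mon_induct:
  assumes "P 0" "\<And>u j. P u \<Longrightarrow> P (u + ev j)"
  shows "P (u :: 'v::finite mon)"
proof (induction "tdeg u" arbitrary: u)
  case 0
  then have "u = 0" unfolding tdeg_UNIV by (intro poly_mapping_eqI) simp
  then show ?case using assms(1) by simp
next
  case (Suc n)
  then have "u \<noteq> 0" by (auto simp: tdeg_def)
  then obtain j where j: "0 < lk u j" by (metis gr0I lookup_zero poly_mapping_eqI)
  then have u: "u = (u - ev j) + ev j" using mon_m3 by metis
  then have "tdeg (u - ev j) = n" using Suc(2) tdeg_ev[of "u - ev j" j] by simp
  then have "P (u - ev j)" using Suc(1) by simp
  then have "P ((u - ev j) + ev j)" by (rule assms(2))
  then show ?case using u by simp
qed

lemma sng_sum: "sng k (sum f A) = (\<Sum>x\<in>A. sng k (f x))"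
  by (induction A rule: infinite_finite_induct) (auto simp: single_add)


locale derivs =
  fixes D :: "'v::{finite,linorder} \<Rightarrow> 'c::comm_ring_1 \<Rightarrow> 'c"
  assumes D_add: "D i (a + b) = D i a + D i b"
    and D_mult: "D i (a * b) = a * D i b + D i a * b"
    and D_comm: "D i (D j a) = D j (D i a)"
begin

lemma D_zero [simp]: "D i 0 = 0"
  using D_add[of i 0 0] by simp

lemma D_uminus: "D i (- a) = - D i a"
  using D_add[of i a "- a"] by (simp add: eq_neg_iff_add_eq_0 add.commute)

lemma D_diff: "D i (a - b) = D i a - D i b"
  using D_add[of i a "- b"] by (simp add: D_uminus)

lemma D_sum: "D i (sum f A) = sum (\<lambda>x. D i (f x)) A"
  by (induction A rule: infinite_finite_induct) (auto simp: D_add)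

lemma D_one [simp]: "D i 1 = 0"
  using D_mult[of i 1 1] by simp

lemma D_of_nat [simp]: "D i (of_nat n) = 0"
  by (induction n) (auto simp: D_add)

lemma D_of_nat_mult: "D i (of_nat n * a) = of_nat n * D i a"
  by (induction n) (auto simp: D_add algebra_simps)

lemma Dp_ev: "Dpow D (w + ev j) c = D j (Dpow D w c)"
  by (rule Dpow_ev) (rule D_comm)

lemma Dp_add: "Dpow D w (a + b) = Dpow D w a + Dpow D w b"
  by (rule Dpow_add) (rule D_add)

lemma Dp_zero [simp]: "Dpow D w 0 = 0"
  using Dp_add[of w 0 0] by simp

definition mm :: "'v mon \<Rightarrow> 'c \<Rightarrow> 'v mon \<Rightarrow> 'c \<Rightarrow> ('v, 'c) dop" where
  "mm u a v b = (\<Sum>w\<in>Wset u. sng (u - w + v) (of_nat (mbinom u w) * a * Dpow D w b))"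

lemma dm_def': "dop_mult D P Q = (\<Sum>u\<in>ks P. \<Sum>v\<in>ks Q. mm u (lk P u) v (lk Q v))"
  unfolding dop_mult_def mm_def Wset_def ..

lemma mm_zero1 [simp]: "mm u 0 v b = 0" by (simp add: mm_def)
lemma mm_zero2 [simp]: "mm u a v 0 = 0" by (simp add: mm_def)

lemma mm_add1: "mm u (a + a') v b = mm u a v b + mm u a' v b"
  by (simp add: mm_def sum.distrib[symmetric] single_add[symmetric] algebra_simps)
lemma mm_add2: "mm u a v (b + b') = mm u a v b + mm u a v b'"
  by (simp add: mm_def sum.distrib[symmetric] single_add[symmetric] algebra_simps Dp_add)
lemma mm_cm: "mm u (q * a) v b = cm q (mm u a v b)"
  by (simp add: mm_def cm_sum cm_sng algebra_simps)

lemma dm_sup: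
  assumes "finite A" "ks P \<subseteq> A" "finite B" "ks Q \<subseteq> B"
  shows "dop_mult D P Q = (\<Sum>u\<in>A. \<Sum>v\<in>B. mm u (lk P u) v (lk Q v))"
proof -
  have "dop_mult D P Q = (\<Sum>u\<in>A. \<Sum>v\<in>ks Q. mm u (lk P u) v (lk Q v))"
    unfolding dm_def' using assms by (intro sum.mono_neutral_left) (auto simp: in_keys_iff)
  also have "\<dots> = (\<Sum>u\<in>A. \<Sum>v\<in>B. mm u (lk P u) v (lk Q v))"
    using assms by (intro sum.cong refl sum.mono_neutral_left) (auto simp: in_keys_iff)
  finally show ?thesis .
qed

lemma dm_add1: "dop_mult D (P + P') Q = dop_mult D P Q + dop_mult D P' Q"
proof -
  have "ks (P + P') \<subseteq> ks P \<union> ks P'" by (rule keys_add)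
  then show ?thesis
    by (simp add: dm_sup[of "ks P \<union> ks P'" _ "ks Q"] lookup_add mm_add1 sum.distrib)
qed

lemma dm_add2: "dop_mult D P (Q + Q') = dop_mult D P Q + dop_mult D P Q'"
proof -
  have "ks (Q + Q') \<subseteq> ks Q \<union> ks Q'" by (rule keys_add)
  then show ?thesis
    by (simp add: dm_sup[of "ks P" _ "ks Q \<union> ks Q'"] lookup_add mm_add2 sum.distrib)
qed

lemma dm_zero1 [simp]: "dop_mult D 0 Q = 0" by (simp add: dm_def')
lemma dm_zero2 [simp]: "dop_mult D P 0 = 0" by (simp add: dm_def')

lemma dm_sum1: "dop_mult D (sum f A) Q = (\<Sum>x\<in>A. dop_mult D (f x) Q)"
  by (induction A rule: infinite_finite_induct) (auto simp: dm_add1)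
lemma dm_sum2: "dop_mult D P (sum f A) = (\<Sum>x\<in>A. dop_mult D P (f x))"
  by (induction A rule: infinite_finite_induct) (auto simp: dm_add2)

lemma dm_cm1: "dop_mult D (cm q P) Q = cm q (dop_mult D P Q)"
  by (simp add: dm_sup[of "ks P" _ "ks Q"] ks_cm mm_cm cm_sum)

lemma dm_sng1: "dop_mult D (sng u a) Q = (\<Sum>v\<in>ks Q. mm u a v (lk Q v))"
  by (simp add: dm_sup[of "{u}" _ "ks Q"])

lemma dm_sng_sng: "dop_mult D (sng u a) (sng v b) = mm u a v b"
  by (simp add: dm_sup[of "{u}" _ "{v}"])

lemma mm_zero_mon: "mm 0 a v b = sng v (a * b)"
proof -
  have W: "Wset 0 = {0}" by (auto simp: Wset_def intro: poly_mapping_eqI)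
  show ?thesis by (simp add: mm_def mbinom_0 W)
qed

lemma dm_const: "dop_mult D (sng 0 q) R = cm q R"
  by (simp add: dm_sng1 mm_zero_mon cm_sng[symmetric] cm_sum[symmetric] pm_sum_single[symmetric])

lemma dm_one: "dop_mult D 1 R = R"
  using dm_const[of 1 R] by simp

definition dd :: "'v \<Rightarrow> ('v, 'c) dop \<Rightarrow> ('v, 'c) dop" where
  "dd i R = dop_mult D (sng (ev i) 1) R"

lemma mm_ev: "mm (ev i) a v b = sng (ev i + v) (a * b) + sng v (a * D i b)"
proof -
  have "Dpow D (ev i) b = D i b" using Dp_ev[of 0 i b] by simp
  then show ?thesis by (simp add: mm_def Wset_ev mbinom_0 mbinom_same)
qed

lemma dd_sng: "dd i (sng k c) = sng (ev i + k) c + sng k (D i c)"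
  by (simp add: dd_def dm_sng_sng mm_ev)

lemma dd_add: "dd i (R + S) = dd i R + dd i S"
  by (simp add: dd_def dm_add2)
lemma dd_sum: "dd i (sum f A) = (\<Sum>x\<in>A. dd i (f x))"
  by (simp add: dd_def dm_sum2)
lemma dd_zero [simp]: "dd i 0 = 0"
  by (simp add: dd_def)

lemma dd_expl: "dd i R = (\<Sum>v\<in>ks R. sng (ev i + v) (lk R v) + sng v (D i (lk R v)))"
  by (simp add: dd_def dm_sng1 mm_ev)

lemma mm_dd_term:
  "dd i (sng k (of_nat n * a * Dpow D w b)) =
     sng (ev i + k) (of_nat n * a * Dpow D w b) + sng k (of_nat n * a * Dpow D (w + ev i) b)
     + sng k (of_nat n * D i a * Dpow D w b)"
proof -
  have "D i (of_nat n * a * Dpow D w b) = of_nat n * a * Dpow D (w + ev i) b + of_nat n * D i a * Dpow D w b"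
    by (simp only: D_mult D_of_nat mult_zero_left add_0_right Dp_ev)
  then show ?thesis by (simp add: dd_sng single_add add.assoc)
qed

lemma mm_pascal: "dd i (mm u a v b) = mm (u + ev i) a v b + mm u (D i a) v b"
proof -
  have L: "dd i (mm u a v b) =
     (\<Sum>w\<in>Wset u. sng (ev i + (u - w + v)) (of_nat (mbinom u w) * a * Dpow D w b))
   + (\<Sum>w\<in>Wset u. sng (u - w + v) (of_nat (mbinom u w) * a * Dpow D (w + ev i) b))
   + mm u (D i a) v b"
    unfolding mm_def dd_sum mm_dd_term sum.distrib ..
  have X1: "(\<Sum>w\<in>Wset (u + ev i). sng (u + ev i - w + v) (of_nat (mbinom u w) * a * Dpow D w b))
      = (\<Sum>w\<in>Wset u. sng (ev i + (u - w + v)) (of_nat (mbinom u w) * a * Dpow D w b))"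
  proof -
    have "(\<Sum>w\<in>Wset (u + ev i). sng (u + ev i - w + v) (of_nat (mbinom u w) * a * Dpow D w b))
      = (\<Sum>w\<in>Wset u. sng (u + ev i - w + v) (of_nat (mbinom u w) * a * Dpow D w b))"
      by (rule sum.mono_neutral_right) (auto simp: finite_Wset Wset_sub mbinom_zero)
    also have "\<dots> = (\<Sum>w\<in>Wset u. sng (ev i + (u - w + v)) (of_nat (mbinom u w) * a * Dpow D w b))"
      by (rule sum.cong) (auto simp: mon_m1)
    finally show ?thesis .
  qed
  have X2: "(\<Sum>w\<in>Wset (u + ev i). (if 0 < lk w i then sng (u + ev i - w + v) (of_nat (mbinom u (w - ev i)) * a * Dpow D w b) else 0))
      = (\<Sum>w\<in>Wset u. sng (u - w + v) (of_nat (mbinom u w) * a * Dpow D (w + ev i) b))"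
  proof -
    have "(\<Sum>w\<in>Wset (u + ev i). (if 0 < lk w i then sng (u + ev i - w + v) (of_nat (mbinom u (w - ev i)) * a * Dpow D w b) else 0))
       = (\<Sum>w\<in>{w\<in>Wset (u + ev i). 0 < lk w i}. sng (u + ev i - w + v) (of_nat (mbinom u (w - ev i)) * a * Dpow D w b))"
      by (simp add: sum.inter_filter finite_Wset)
    also have "\<dots> = (\<Sum>w\<in>Wset u. sng (u - w + v) (of_nat (mbinom u w) * a * Dpow D (w + ev i) b))"
      by (rule sum.reindex_bij_betw[OF bij_Wset_ev, symmetric, THEN trans]) simp
    finally show ?thesis .
  qed
  have "mm (u + ev i) a v b =
      (\<Sum>w\<in>Wset (u + ev i). sng (u + ev i - w + v) (of_nat (mbinom u w) * a * Dpow D w b))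
    + (\<Sum>w\<in>Wset (u + ev i). (if 0 < lk w i then sng (u + ev i - w + v) (of_nat (mbinom u (w - ev i)) * a * Dpow D w b) else 0))"
    unfolding mm_def mbinom_pascal sum.distrib[symmetric]
  proof (rule sum.cong[OF refl])
    fix w
    show "sng (u + ev i - w + v) (of_nat (mbinom u w + (if 0 < lk w i then mbinom u (w - ev i) else 0)) * a * Dpow D w b) =
         sng (u + ev i - w + v) (of_nat (mbinom u w) * a * Dpow D w b) +
         (if 0 < lk w i then sng (u + ev i - w + v) (of_nat (mbinom u (w - ev i)) * a * Dpow D w b) else 0)"
      by (cases "0 < lk w i") (simp_all only: if_True if_False single_add[symmetric] of_nat_add distrib_right add_0_right of_nat_0)
  qed
  then show ?thesis using L X1 X2 by (simp only: add.assoc)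
qed

lemma dd_assoc: "dd i (dop_mult D P Q) = dop_mult D (dd i P) Q"
proof -
  have "dd i (dop_mult D P Q) = (\<Sum>u\<in>ks P. \<Sum>v\<in>ks Q. mm (u + ev i) (lk P u) v (lk Q v) + mm u (D i (lk P u)) v (lk Q v))"
    by (simp add: dm_def' dd_sum mm_pascal)
  also have "\<dots> = dop_mult D (dd i P) Q"
    by (simp add: dd_expl[of i P] dm_sum1 dm_add1 dm_sng1 sum.distrib add.commute)
  finally show ?thesis .
qed

lemma dd_cm: "dd i (cm q S) = cm q (dd i S) + cm (D i q) S"
proof -
  have "dd i (cm q S) = dd i (dop_mult D (sng 0 q) S)" by (simp add: dm_const)
  also have "\<dots> = dop_mult D (dd i (sng 0 q)) S" by (rule dd_assoc)
  also have "\<dots> = dop_mult D (cm q (sng (ev i) 1)) S + cm (D i q) S"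
    by (simp add: dd_sng dm_add1 dm_const cm_sng)
  also have "\<dots> = cm q (dd i S) + cm (D i q) S"
    by (simp add: dm_cm1 dd_def)
  finally show ?thesis .
qed

lemma dd_comm: "dd i (dd j R) = dd j (dd i R)"
proof -
  have "dd i (dd j R) = dop_mult D (dd i (sng (ev j) 1)) R"
    unfolding dd_def[of j R] by (rule dd_assoc)
  also have "\<dots> = dop_mult D (sng (ev i + ev j) 1) R"
    by (simp add: dd_sng)
  also have "\<dots> = dop_mult D (dd j (sng (ev i) 1)) R"
    by (simp add: dd_sng add.commute)
  also have "\<dots> = dd j (dd i R)"
    unfolding dd_def[of i R] by (rule dd_assoc[symmetric])
  finally show ?thesis .
qed

lemma dd_lookup: "lk (dd i R) w = (if 0 < lk w i then lk R (w - ev i) else 0) + D i (lk R w)"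
proof -
  have "lk (dd i R) w = (\<Sum>v\<in>ks R. (if ev i + v = w then lk R v else 0)) + (\<Sum>v\<in>ks R. (if v = w then D i (lk R v) else 0))"
    by (simp add: dd_expl lookup_sum lookup_add lookup_single when_def sum.distrib)
  also have "(\<Sum>v\<in>ks R. (if ev i + v = w then lk R v else 0)) = (\<Sum>v\<in>ks R. (if v = w - ev i then (if 0 < lk w i then lk R v else 0) else 0))"
    by (rule sum.cong) (auto simp: ev_add_eq)
  also have "\<dots> = (if 0 < lk w i then lk R (w - ev i) else 0)"
    by (simp add: in_keys_iff)
  also have "(\<Sum>v\<in>ks R. (if v = w then D i (lk R v) else 0)) = D i (lk R w)"
    by (simp add: in_keys_iff)
  finally show ?thesis .
qed

end

lemma mon_sub_add: "0 < lk (a::'v mon) i \<Longrightarrow> a - ev i + b = a + b - ev i"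
  by (rule poly_mapping_eqI) (auto simp: lookup_add lookup_minus lk_ev)
lemma mon_add_sub: "0 < lk (b::'v mon) i \<Longrightarrow> a + (b - ev i) = a + b - ev i"
  by (rule poly_mapping_eqI) (auto simp: lookup_add lookup_minus lk_ev)

lemma mpd_lookup:
  "lk (mp_deriv i p) k = of_nat (lk k i + 1) * lk p (k + ev i)"
proof -
  have "lk (mp_deriv i p) k = (\<Sum>m\<in>ks p. (if m - ev i = k then of_nat (lk m i) * lk p m else 0))"
    unfolding mp_deriv_def ev_def[symmetric] by (simp add: lookup_sum lookup_single when_def)
  also have "\<dots> = (\<Sum>m\<in>ks p. (if m = k + ev i then of_nat (lk m i) * lk p m else 0))"
  proof (rule sum.cong[OF refl])
    fix m
    show "(if m - ev i = k then of_nat (lk m i) * lk p m else 0) = (if m = k + ev i then of_nat (lk m i) * lk p m else 0)"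
    proof (cases "m = k + ev i")
      case True then show ?thesis by simp
    next
      case False
      have "m - ev i = k \<Longrightarrow> lk m i = 0"
        using mon_m3[of m i] False by (metis gr0I)
      then show ?thesis using False by auto
    qed
  qed
  also have "\<dots> = of_nat (lk k i + 1) * lk p (k + ev i)"
    by (simp add: lookup_add lk_ev in_keys_iff)
  finally show ?thesis .
qed

lemma mpd_add: "mp_deriv i (p + q) = mp_deriv i p + mp_deriv i q"
  by (rule poly_mapping_eqI) (simp add: mpd_lookup lookup_add algebra_simps)

lemma mpd_comm: "mp_deriv i (mp_deriv j p) = mp_deriv j (mp_deriv i p)"
proof (rule poly_mapping_eqI)
  fix k
  show "lk (mp_deriv i (mp_deriv j p)) k = lk (mp_deriv j (mp_deriv i p)) k"
  proof (cases "i = j")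
    case True then show ?thesis by simp
  next
    case False
    then show ?thesis
      by (simp add: mpd_lookup lookup_add lk_ev add_ac mult_ac)
  qed
qed

lemma mpd_sng: "mp_deriv i (sng m c) = sng (m - ev i) (of_nat (lk m i) * c)"
proof (rule poly_mapping_eqI)
  fix k
  show "lk (mp_deriv i (sng m c)) k = lk (sng (m - ev i) (of_nat (lk m i) * c)) k"
  proof (cases "m = k + ev i")
    case True then show ?thesis
      by (simp add: mpd_lookup lookup_add lk_ev)
  next
    case False
    have "m - ev i = k \<Longrightarrow> lk m i = 0"
      using mon_m3[of m i] False by (metis gr0I)
    then show ?thesis using False
      by (auto simp: mpd_lookup lookup_single when_def)
  qed
qed

lemma mpd_zero [simp]: "mp_deriv i 0 = 0"
  using mpd_add[of i 0 0] by simp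

lemma mpd_sum: "mp_deriv i (sum f A) = (\<Sum>x\<in>A. mp_deriv i (f x))"
  by (induction A rule: infinite_finite_induct) (auto simp: mpd_add)

lemma mpd_mult_sng:
  "mp_deriv i (sng a c * sng b d) = sng a c * mp_deriv i (sng b d) + mp_deriv i (sng a c) * sng b d"
proof -
  have L: "mp_deriv i (sng a c * sng b d) = sng (a + b - ev i) (of_nat (lk a i) * (c * d) + of_nat (lk b i) * (c * d))"
    by (simp add: mult_single mpd_sng lookup_add algebra_simps)
  have R1: "sng a c * mp_deriv i (sng b d) = sng (a + b - ev i) (of_nat (lk b i) * (c * d))"
  proof (cases "lk b i = 0")
    case True then show ?thesis by (simp add: mpd_sng)
  next
    case False then show ?thesis by (simp add: mpd_sng mult_single mon_add_sub algebra_simps)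
  qed
  have R2: "mp_deriv i (sng a c) * sng b d = sng (a + b - ev i) (of_nat (lk a i) * (c * d))"
  proof (cases "lk a i = 0")
    case True then show ?thesis by (simp add: mpd_sng)
  next
    case False
    then have "a - ev i + b = a + b - ev i" by (simp add: mon_sub_add)
    then show ?thesis by (simp add: mpd_sng mult_single algebra_simps)
  qed
  show ?thesis using L R1 R2 by (simp add: single_add add.commute)
qed

lemma mpd_mult: "mp_deriv i (p * q) = p * mp_deriv i q + mp_deriv i p * q"
proof -
  have "p * q = (\<Sum>a\<in>ks p. \<Sum>b\<in>ks q. sng a (lk p a) * sng b (lk q b))"
    by (subst pm_sum_single[of p], subst pm_sum_single[of q]) (simp add: sum_product)
  then have "mp_deriv i (p * q) = (\<Sum>a\<in>ks p. \<Sum>b\<in>ks q. sng a (lk p a) * mp_deriv i (sng b (lk q b)) + mp_deriv i (sng a (lk p a)) * sng b (lk q b))"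
    by (simp add: mpd_sum mpd_mult_sng)
  also have "\<dots> = p * mp_deriv i q + mp_deriv i p * q"
  proof -
    have p: "p = (\<Sum>a\<in>ks p. sng a (lk p a))" by (rule pm_sum_single)
    have q: "q = (\<Sum>b\<in>ks q. sng b (lk q b))" by (rule pm_sum_single)
    have dp: "mp_deriv i p = (\<Sum>a\<in>ks p. mp_deriv i (sng a (lk p a)))"
      by (rule trans[OF arg_cong[OF p, of "mp_deriv i"] mpd_sum])
    have dq: "mp_deriv i q = (\<Sum>b\<in>ks q. mp_deriv i (sng b (lk q b)))"
      by (rule trans[OF arg_cong[OF q, of "mp_deriv i"] mpd_sum])
    have "p * mp_deriv i q = (\<Sum>a\<in>ks p. \<Sum>b\<in>ks q. sng a (lk p a) * mp_deriv i (sng b (lk q b)))"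
    proof -
      have "p * mp_deriv i q = (\<Sum>a\<in>ks p. sng a (lk p a)) * (\<Sum>b\<in>ks q. mp_deriv i (sng b (lk q b)))"
        by (simp only: dq[symmetric] p[symmetric])
      then show ?thesis by (simp add: sum_product)
    qed
    moreover have "mp_deriv i p * q = (\<Sum>a\<in>ks p. \<Sum>b\<in>ks q. mp_deriv i (sng a (lk p a)) * sng b (lk q b))"
    proof -
      have "mp_deriv i p * q = (\<Sum>a\<in>ks p. mp_deriv i (sng a (lk p a))) * (\<Sum>b\<in>ks q. sng b (lk q b))"
        by (simp only: dp[symmetric] q[symmetric])
      then show ?thesis by (simp add: sum_product)
    qed
    ultimately show ?thesis by (simp add: sum.distrib)
  qed
  finally show ?thesis .
qed

interpretation mpd: derivs "mp_deriv :: 'v::{finite,linorder} \<Rightarrow> ('v, 'k::comm_ring_1) mpoly \<Rightarrow> _"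
  by unfold_locales (auto simp: mpd_add mpd_mult mpd_comm)


context
  fixes i :: "'v::{finite,linorder}"
begin

abbreviation (input) md :: "('v, 'k::field_char_0) mpoly \<Rightarrow> ('v, 'k) mpoly" where "md \<equiv> mp_deriv i"

lemma rf_wd:
  fixes a b c d :: "('v, 'k::field_char_0) mpoly"
  assumes "a * d = c * b"
  shows "(md a * b - a * md b) * (d * d) = (md c * d - c * md d) * (b * b)"
proof -
  have H: "a * md d + md a * d = c * md b + md c * b"
    using arg_cong[OF assms, of "md"] by (simp add: mpd_mult)
  have "(md a * b - a * md b) * (d * d) - (md c * d - c * md d) * (b * b)
     = b * d * ((a * md d + md a * d) - (c * md b + md c * b)) - (a * d - c * b) * (md b * d + b * md d)"
    by (simp add: algebra_simps)
  also have "\<dots> = 0" using H assms by simp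
  finally show ?thesis by simp
qed

lemma rf_Fract:
  fixes a b :: "('v, 'k::field_char_0) mpoly"
  assumes "b \<noteq> 0"
  shows "rf_deriv i (Fract a b) = Fract (md a * b - a * md b) (b * b)"
  unfolding rf_deriv_def
proof (rule the_equality)
  show "\<forall>a' b'. b' \<noteq> 0 \<longrightarrow> Fract a b = Fract a' b' \<longrightarrow>
      Fract (md a * b - a * md b) (b * b) = Fract (md a' * b' - a' * md b') (b' * b')"
  proof (intro allI impI)
    fix a' b' :: "('v, 'k) mpoly"
    assume b': "b' \<noteq> 0" and eq: "Fract a b = Fract a' b'"
    then have "a * b' = a' * b" using assms by (simp add: eq_fract)
    then show "Fract (md a * b - a * md b) (b * b) = Fract (md a' * b' - a' * md b') (b' * b')"
      using assms b' by (simp add: eq_fract rf_wd)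
  qed
next
  fix r
  assume "\<forall>a' b'. b' \<noteq> 0 \<longrightarrow> Fract a b = Fract a' b' \<longrightarrow> r = Fract (md a' * b' - a' * md b') (b' * b')"
  then show "r = Fract (md a * b - a * md b) (b * b)" using assms by blast
qed

end

lemma rf_add: "rf_deriv i (q + r) = rf_deriv i q + rf_deriv i (r :: ('v::{finite,linorder}, 'k::field_char_0) mpoly fract)"
proof -
  obtain a b where q: "q = Fract a b" "b \<noteq> 0" by (cases q)
  obtain c d where r: "r = Fract c d" "d \<noteq> 0" by (cases r)
  show ?thesis using q r
    by (simp add: rf_Fract eq_fract mpd_add mpd_mult mpd.D_diff algebra_simps)
qed

lemma rf_mult: "rf_deriv i (q * r) = q * rf_deriv i r + rf_deriv i q * (r :: ('v::{finite,linorder}, 'k::field_char_0) mpoly fract)"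
proof -
  obtain a b where q: "q = Fract a b" "b \<noteq> 0" by (cases q)
  obtain c d where r: "r = Fract c d" "d \<noteq> 0" by (cases r)
  show ?thesis using q r
    by (simp add: rf_Fract eq_fract mpd_add mpd_mult mpd.D_diff algebra_simps)
qed

lemma rf_comm: "rf_deriv i (rf_deriv j q) = rf_deriv j (rf_deriv i (q :: ('v::{finite,linorder}, 'k::field_char_0) mpoly fract))"
proof -
  obtain a b where q: "q = Fract a b" "b \<noteq> 0" by (cases q)
  have "mp_deriv i (mp_deriv j a * b - a * mp_deriv j b) * (b * b) - (mp_deriv j a * b - a * mp_deriv j b) * mp_deriv i (b * b)
      = mp_deriv j (mp_deriv i a * b - a * mp_deriv i b) * (b * b) - (mp_deriv i a * b - a * mp_deriv i b) * mp_deriv j (b * b)"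
    by (simp add: mpd_add mpd_mult mpd.D_diff mpd_comm[of j i] algebra_simps)
  then show ?thesis using q
    by (simp add: rf_Fract)
qed

interpretation rfd: derivs "rf_deriv :: 'v::{finite,linorder} \<Rightarrow> ('v, 'k::field_char_0) mpoly fract \<Rightarrow> _"
  by unfold_locales (auto simp: rf_add rf_mult rf_comm)

lemma rf_Fract1: "rf_deriv i (Fract a 1) = Fract (mp_deriv i a) 1"
  by (simp add: rf_Fract)


context
  fixes dummy :: "'v::{finite,linorder} \<times> 'k::field_char_0"
begin
end

definition dl :: "'v::{finite,linorder} \<Rightarrow> ('v, ('v, 'k::field_char_0) mpoly) dop \<Rightarrow> ('v, ('v, 'k) mpoly) dop" where
  "dl i R = cm (sng (ev i) 1) (mpd.dd i R)"

lemma pmult_euler: "pmult (euler i) R = dl i R"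
proof -
  have E: "euler i = cm (sng (ev i) 1) (sng (ev i) 1)"
    by (simp add: euler_def ev_def cm_sng)
  show ?thesis unfolding E by (simp add: mpd.dm_cm1 dl_def mpd.dd_def)
qed

lemma pmult_dl: "pmult (dl i A) R = dl i (pmult A R)"
  by (simp add: dl_def mpd.dm_cm1 mpd.dd_assoc)

lemma pmult_pow: "pmult ((pmult (euler i) ^^ k) 1) R = (dl i ^^ k) R"
  by (induction k) (simp_all add: mpd.dm_one pmult_euler pmult_dl)

lemma delta_pow_Dpow: "delta_pow u = Dpow dl u 1"
  unfolding delta_pow_def Dpow_def
  by (rule fold_cong) (simp_all add: fun_eq_iff pmult_pow)

lemma mpd_ev_zero: "i \<noteq> j \<Longrightarrow> mp_deriv i (sng (ev j) 1) = 0"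
  by (simp add: mpd_sng lk_ev)

lemma dl_comm: "dl i (dl j R) = dl j (dl i R)"
proof (cases "i = j")
  case True then show ?thesis by simp
next
  case False
  have "dl i (dl j R) = cm (sng (ev i) 1 * sng (ev j) 1) (mpd.dd i (mpd.dd j R))"
    using False by (simp add: dl_def mpd.dd_cm mpd_ev_zero cm_add cm_cm)
  also have "\<dots> = cm (sng (ev j) 1 * sng (ev i) 1) (mpd.dd j (mpd.dd i R))"
    by (simp add: mpd.dd_comm mult.commute)
  also have "\<dots> = dl j (dl i R)"
    using False by (simp add: dl_def mpd.dd_cm mpd_ev_zero cm_add cm_cm)
  finally show ?thesis .
qed

lemma delta_pow_ev: "delta_pow (u + ev j) = dl j (delta_pow u)"
  unfolding delta_pow_Dpow by (rule Dpow_ev) (rule dl_comm)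

lemma delta_pow_0: "delta_pow 0 = 1"
  unfolding delta_pow_Dpow by simp

lemma dl_const: "dl i (cm (sng 0 k) R) = cm (sng 0 k) (dl i R)"
  by (simp add: dl_def mpd.dd_cm mpd_sng cm_add cm_cm mult.commute)

lemma xi_mpd: "sng (ev i) 1 * mp_deriv i (sng v (1::'k::comm_ring_1)) = sng v (of_nat (lk v i))"
proof (cases "lk v i = 0")
  case True then show ?thesis by (simp add: mpd_sng)
next
  case False
  then have "ev i + (v - ev i) = v" using mon_m3[of v i] by (simp add: add.commute)
  then show ?thesis by (simp add: mpd_sng mult_single)
qed

lemma sng_of_nat_mult: "sng v (1::'k::comm_ring_1) * of_nat n = sng v (of_nat n)"
  by (subst single_of_nat[symmetric]) (simp only: mult_single add_0_right mult_1)

lemma dl_xmon: "dl i (cm (sng v 1) R) = cm (sng v 1) (dl i R) + cm (sng 0 (of_nat (lk v i))) (cm (sng v 1) R)"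
proof -
  have "dl i (cm (sng v 1) R) = cm (sng (ev i) 1 * sng v 1) (mpd.dd i R) + cm (sng (ev i) 1 * mp_deriv i (sng v 1)) R"
    by (simp add: dl_def mpd.dd_cm cm_add cm_cm)
  also have "\<dots> = cm (sng v 1) (dl i R) + cm (sng 0 (of_nat (lk v i))) (cm (sng v 1) R)"
    by (simp add: xi_mpd dl_def cm_cm mult_single mult.commute sng_of_nat_mult)
  finally show ?thesis .
qed

lemma lk_dl: "lk (dl j R) w = sng (ev j) 1 * ((if 0 < lk w j then lk R (w - ev j) else 0) + mp_deriv j (lk R w))"
  by (simp add: dl_def mpd.dd_lookup)

lemma delta_pow_struct:
  "(\<forall>w. lk (delta_pow u :: ('v::{finite,linorder}, ('v, 'k::field_char_0) mpoly) dop) w \<noteq> 0 \<longrightarrow> w \<in> Wset u) \<and> lk (delta_pow u :: ('v, ('v, 'k) mpoly) dop) u = sng u 1"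
proof (induction u rule: mon_induct)
  case 1
  have W: "Wset (0::'v mon) = {0}" by (auto simp: Wset_def intro: poly_mapping_eqI)
  have "lk (delta_pow 0 :: ('v, ('v, 'k) mpoly) dop) w = (if w = 0 then 1 else 0)" for w
    by (simp add: delta_pow_0 lookup_one when_def)
  then show ?case using W by simp
next
  case (2 u j)
  let ?R = "delta_pow u :: ('v, ('v, 'k) mpoly) dop"
  let ?R' = "delta_pow (u + ev j) :: ('v, ('v, 'k) mpoly) dop"
  have IH1: "lk ?R w = 0" if "w \<notin> Wset u" for w using 2 that by blast
  have IH2: "lk ?R u = sng u 1" using 2 by blast
  have A: "lk ?R' w = 0" if nw: "w \<notin> Wset (u + ev j)" for w
  proof -
    have "w \<notin> Wset u" using nw subsetD[OF Wset_sub[of u j]] by metis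
    then have z1: "lk ?R w = 0" by (rule IH1)
    have z2: "lk ?R (w - ev j) = 0" if pos: "0 < lk w j"
    proof -
      have "w - ev j \<notin> Wset u"
      proof
        assume "w - ev j \<in> Wset u"
        then have "w - ev j + ev j \<in> Wset (u + ev j)"
          unfolding Wset_def by (simp add: lookup_add)
        then show False using nw mon_m3[OF pos] by simp
      qed
      then show ?thesis by (rule IH1)
    qed
    show ?thesis
    proof (cases "0 < lk w j")
      case True then show ?thesis using z1 z2 by (simp add: delta_pow_ev lk_dl)
    next
      case False then show ?thesis using z1 by (simp add: delta_pow_ev lk_dl)
    qed
  qed
  have B: "lk ?R' (u + ev j) = sng (u + ev j) 1"
  proof -
    have "u + ev j \<notin> Wset u"
    proof
      assume "u + ev j \<in> Wset u"
      then have "lk (u + ev j) j \<le> lk u j" unfolding Wset_def by blast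
      then show False by (simp add: lookup_add lk_ev)
    qed
    then have "lk ?R (u + ev j) = 0" by (rule IH1)
    moreover have "lk (u + ev j) j > 0" by (simp add: lookup_add lk_ev)
    ultimately show ?thesis using IH2
      by (simp add: delta_pow_ev lk_dl mult_single add.commute)
  qed
  show ?case using A B by blast
qed


definition rterm :: "'v::{finite,linorder} mon \<Rightarrow> 'v mon \<Rightarrow> 'k::field_char_0 \<Rightarrow> ('v, ('v, 'k) mpoly) dop" where
  "rterm v u k = cm (sng v 1) (cm (sng 0 k) (delta_pow u))"

definition supp :: "('a \<Rightarrow> 'b \<Rightarrow> 'k::zero) \<Rightarrow> ('a \<times> 'b) set" where
  "supp c = {(v, u). c v u \<noteq> 0}"

definition rsum :: "('v::{finite,linorder} mon \<Rightarrow> 'v mon \<Rightarrow> 'k::field_char_0) \<Rightarrow> ('v, ('v, 'k) mpoly) dop" where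
  "rsum c = (\<Sum>(v, u)\<in>supp c. rterm v u (c v u))"

lemma sng_mult_of_nat: "sng v (k::'k::comm_ring_1) * of_nat n = sng v (k * of_nat n)"
  by (subst single_of_nat[symmetric]) (simp only: mult_single add_0_right)

lemma rterm_zero [simp]: "rterm v u 0 = 0"
  by (simp add: rterm_def)

lemma rterm_add: "rterm v u (a + b) = rterm v u a + rterm v u b"
  by (simp add: rterm_def single_add cm_add_left cm_add)

lemma rterm_diff: "rterm v u (a - b) = rterm v u a - rterm v u b"
proof -
  have "rterm v u (a - b) + rterm v u b = rterm v u a" using rterm_add[of v u "a - b" b] by simp
  then show ?thesis by (simp add: eq_diff_eq)
qed

lemma rterm_scale: "rterm v u (s * k) = cm (sng 0 s) (rterm v u k)"
  by (simp add: rterm_def cm_cm mult_single mult.commute)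

lemma rterm_shift: "cm (sng a 1) (rterm v u k) = rterm (a + v) u k"
  by (simp add: rterm_def cm_cm mult_single)

lemma dl_add: "dl j (R + S) = dl j R + dl j S"
  by (simp add: dl_def mpd.dd_add cm_add)
lemma dl_zero [simp]: "dl j 0 = 0"
  by (simp add: dl_def)
lemma dl_sum: "dl j (sum f A) = (\<Sum>x\<in>A. dl j (f x))"
  by (induction A rule: infinite_finite_induct) (auto simp: dl_add)
lemma dl_cm_scale: "dl j (cm (sng 0 s) R) = cm (sng 0 s) (dl j R)"
  by (rule dl_const)

lemma rterm_dl: "dl j (rterm v u k) = rterm v (u + ev j) k + rterm v u (of_nat (lk v j) * k)"
  unfolding rterm_def dl_xmon dl_const delta_pow_ev by (simp add: cm_cm mult_single mult.commute sng_mult_of_nat)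

lemma rsum_sup:
  assumes "finite S" "supp c \<subseteq> S"
  shows "rsum c = (\<Sum>(v, u)\<in>S. rterm v u (c v u))"
  unfolding rsum_def using assms
  by (intro sum.mono_neutral_left) (auto simp: supp_def)

lemma lk_rterm: "lk (rterm v u k) w = sng v 1 * (sng 0 k * lk (delta_pow u) w)"
  by (simp add: rterm_def)

lemma rsum_zero_imp:
  fixes c :: "'v::{finite,linorder} mon \<Rightarrow> 'v mon \<Rightarrow> 'k::field_char_0"
  assumes S: "finite S" and Z: "(\<Sum>(v, u)\<in>S. rterm v u (c v u)) = 0"
  shows "\<forall>(v, u)\<in>S. c v u = 0"
proof (rule ccontr)
  assume "\<not> (\<forall>(v, u)\<in>S. c v u = 0)"
  then obtain v1 u1 where vu1: "(v1, u1) \<in> S" "c v1 u1 \<noteq> 0" by auto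
  define U where "U = {u. \<exists>v. (v, u) \<in> S \<and> c v u \<noteq> 0}"
  have finU: "finite U" unfolding U_def
    by (rule finite_subset[OF _ finite_imageI[OF S, of snd]]) force
  have "u1 \<in> U" using vu1 by (auto simp: U_def)
  then have neU: "tdeg ` U \<noteq> {}" by blast
  obtain us where us: "us \<in> U" "tdeg us = Max (tdeg ` U)"
    using Max_in[OF finite_imageI[OF finU] neU] by auto
  have maxU: "tdeg u \<le> tdeg us" if "(v, u) \<in> S" "c v u \<noteq> 0" for v u
    using that us(2) finU by (auto simp: U_def intro!: Max_ge)
  obtain vs where vs: "(vs, us) \<in> S" "c vs us \<noteq> 0" using us(1) by (auto simp: U_def)
  have trm: "sng v 1 * (sng 0 (c v u) * lk (delta_pow u :: ('v, ('v, 'k) mpoly) dop) us)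
      = (if u = us then sng (v + us) (c v u) else 0)" if "(v, u) \<in> S" for v u
  proof (cases "c v u = 0")
    case True then show ?thesis by auto
  next
    case False
    show ?thesis
    proof (cases "u = us")
      case True then show ?thesis
        using delta_pow_struct[of us, where 'k='k] by (simp add: mult_single)
    next
      case ne: False
      have "lk (delta_pow u :: ('v, ('v, 'k) mpoly) dop) us = 0"
      proof (rule ccontr)
        assume "lk (delta_pow u :: ('v, ('v, 'k) mpoly) dop) us \<noteq> 0"
        then have "us \<in> Wset u" using delta_pow_struct[of u, where 'k='k] by blast
        then have "tdeg us < tdeg u" using ne tdeg_Wset_less by metis
        then show False using maxU[OF that False] by simp
      qed
      then show ?thesis using ne by simp
    qed
  qed
  have "0 = lk (\<Sum>(v, u)\<in>S. rterm v u (c v u)) us" using Z by simp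
  also have "\<dots> = (\<Sum>(v, u)\<in>S. (if u = us then sng (v + us) (c v u) else 0))"
    unfolding lookup_sum by (rule sum.cong) (auto simp: lk_rterm trm)
  finally have Z2: "(\<Sum>(v, u)\<in>S. (if u = us then sng (v + us) (c v u) else 0)) = 0" by simp
  have "0 = lk (\<Sum>(v, u)\<in>S. (if u = us then sng (v + us) (c v u) else 0)) (vs + us)"
    using Z2 by simp
  also have "\<dots> = (\<Sum>x\<in>S. (if x = (vs, us) then c vs us else 0))"
    unfolding lookup_sum by (rule sum.cong) (auto simp: lookup_single when_def split: if_splits)
  also have "\<dots> = c vs us" using vs S by simp
  finally show False using vs by simp
qed

lemma rsum_unique:
  fixes c1 c2 :: "'v::{finite,linorder} mon \<Rightarrow> 'v mon \<Rightarrow> 'k::field_char_0"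
  assumes "finite (supp c1)" "finite (supp c2)" "rsum c1 = rsum c2"
  shows "c1 = c2"
proof -
  let ?S = "supp c1 \<union> supp c2"
  have "(\<Sum>(v, u)\<in>?S. rterm v u (c1 v u - c2 v u)) = rsum c1 - rsum c2"
    using assms(1,2)
    by (simp add: rsum_sup[of ?S c1] rsum_sup[of ?S c2] rterm_diff case_prod_beta sum_subtractf)
  then have "\<forall>(v, u)\<in>?S. c1 v u - c2 v u = 0"
    using assms by (intro rsum_zero_imp) auto
  then show ?thesis
    by (intro ext) (auto simp: supp_def)
qed


definition Repr :: "nat \<Rightarrow> ('v::{finite,linorder}, ('v, 'k::field_char_0) mpoly) dop \<Rightarrow> bool" where
  "Repr k M \<longleftrightarrow> (\<exists>c. finite (supp c) \<and> (\<forall>(v, u)\<in>supp c. tdeg u \<le> k) \<and> M = rsum c)"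

lemma ReprI:
  fixes c :: "'v::{finite,linorder} mon \<Rightarrow> 'v mon \<Rightarrow> 'k::field_char_0"
  assumes "finite S" "\<forall>(v, u)\<in>S. tdeg u \<le> k" "M = (\<Sum>(v, u)\<in>S. rterm v u (c v u))"
  shows "Repr k M"
proof -
  define c' where "c' = (\<lambda>v u. if (v, u) \<in> S then c v u else 0)"
  have sub: "supp c' \<subseteq> S" by (auto simp: supp_def c'_def split: if_splits)
  have "rsum c' = (\<Sum>(v, u)\<in>S. rterm v u (c' v u))"
    using assms(1) sub by (rule rsum_sup)
  also have "\<dots> = M" unfolding assms(3)
    by (rule sum.cong) (auto simp: c'_def)
  finally show ?thesis unfolding Repr_def using sub assms(1,2)
    by (intro exI[of _ c']) (auto intro: finite_subset)
qed

lemma Repr_zero: "Repr k 0"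
  by (rule ReprI[of "{}"]) auto

lemma Repr_add:
  assumes "Repr k M1" "Repr k M2" shows "Repr k (M1 + M2)"
proof -
  obtain c1 where c1: "finite (supp c1)" "\<forall>(v, u)\<in>supp c1. tdeg u \<le> k" "M1 = rsum c1"
    using assms(1) unfolding Repr_def by blast
  obtain c2 where c2: "finite (supp c2)" "\<forall>(v, u)\<in>supp c2. tdeg u \<le> k" "M2 = rsum c2"
    using assms(2) unfolding Repr_def by blast
  let ?S = "supp c1 \<union> supp c2"
  have "M1 + M2 = (\<Sum>(v, u)\<in>?S. rterm v u (c1 v u + c2 v u))"
    using c1 c2 by (simp add: rsum_sup[of ?S c1] rsum_sup[of ?S c2] rterm_add case_prod_beta sum.distrib)
  then show ?thesis using c1 c2 by (intro ReprI[of ?S]) auto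
qed

lemma Repr_sum: "finite A \<Longrightarrow> (\<And>x. x \<in> A \<Longrightarrow> Repr k (f x)) \<Longrightarrow> Repr k (sum f A)"
  by (induction A rule: finite_induct) (auto intro: Repr_add Repr_zero)

lemma Repr_mono: "Repr k M \<Longrightarrow> k \<le> k' \<Longrightarrow> Repr k' M"
  unfolding Repr_def by fastforce

lemma Repr_scale:
  assumes "Repr k M" shows "Repr k (cm (sng 0 s) M)"
proof -
  obtain c where c: "finite (supp c)" "\<forall>(v, u)\<in>supp c. tdeg u \<le> k" "M = rsum c"
    using assms unfolding Repr_def by blast
  have "cm (sng 0 s) M = (\<Sum>(v, u)\<in>supp c. rterm v u (s * c v u))"
    by (simp add: c(3) rsum_def cm_sum rterm_scale case_prod_beta)
  then show ?thesis using c by (intro ReprI[of "supp c"]) auto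
qed

lemma Repr_neg: "Repr k M \<Longrightarrow> Repr k (- M)"
proof -
  assume "Repr k M"
  then have "Repr k (cm (sng 0 (-1)) M)" by (rule Repr_scale)
  moreover have "cm (sng 0 (-1)) M = - M"
    by (rule poly_mapping_eqI) (simp add: single_uminus)
  ultimately show ?thesis by simp
qed

lemma sum_reindex_pair:
  assumes "inj_on g S"
  shows "(\<Sum>x\<in>g ` S. f x) = (\<Sum>x\<in>S. f (g x))"
  using sum.reindex[OF assms] by simp

lemma Repr_shift:
  assumes "Repr k M" shows "Repr k (cm (sng a 1) M)"
proof -
  obtain c where c: "finite (supp c)" "\<forall>(v, u)\<in>supp c. tdeg u \<le> k" "M = rsum c"
    using assms unfolding Repr_def by blast
  define g where "g = (\<lambda>(v::'a mon, u::'a mon). (a + v, u))"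
  have inj: "inj_on g (supp c)" by (auto simp: g_def inj_on_def)
  have "cm (sng a 1) M = (\<Sum>x\<in>supp c. rterm (a + fst x) (snd x) (c (fst x) (snd x)))"
    by (simp add: c(3) rsum_def cm_sum rterm_shift case_prod_beta)
  also have "\<dots> = (\<Sum>x\<in>supp c. (\<lambda>(v, u). rterm v u (c (v - a) u)) (g x))"
    by (rule sum.cong) (auto simp: g_def)
  also have "\<dots> = (\<Sum>(v, u)\<in>g ` supp c. rterm v u (c (v - a) u))"
    using sum.reindex[OF inj, of "\<lambda>(v, u). rterm v u (c (v - a) u)"] by simp
  finally show ?thesis using c inj
    by (intro ReprI[of "g ` supp c"]) (auto simp: g_def)
qed

lemma Repr_dl:
  assumes "Repr k M" shows "Repr (Suc k) (dl j M)"
proof -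
  obtain c where c: "finite (supp c)" "\<forall>(v, u)\<in>supp c. tdeg u \<le> k" "M = rsum c"
    using assms unfolding Repr_def by blast
  define g where "g = (\<lambda>(v::'a mon, u::'a mon). (v, u + ev j))"
  have inj: "inj_on g (supp c)" by (auto simp: g_def inj_on_def)
  have "dl j M = (\<Sum>x\<in>supp c. rterm (fst x) (snd x + ev j) (c (fst x) (snd x)))
      + (\<Sum>x\<in>supp c. rterm (fst x) (snd x) (of_nat (lk (fst x) j) * c (fst x) (snd x)))"
    by (simp add: c(3) rsum_def dl_sum rterm_dl case_prod_beta sum.distrib)
  moreover have "Repr (Suc k) (\<Sum>x\<in>supp c. rterm (fst x) (snd x + ev j) (c (fst x) (snd x)))"
  proof -
    have "(\<Sum>x\<in>supp c. rterm (fst x) (snd x + ev j) (c (fst x) (snd x)))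
        = (\<Sum>x\<in>supp c. (\<lambda>(v, u). rterm v u (c v (u - ev j))) (g x))"
      by (rule sum.cong) (auto simp: g_def)
    also have "\<dots> = (\<Sum>(v, u)\<in>g ` supp c. rterm v u (c v (u - ev j)))"
      using sum.reindex[OF inj, of "\<lambda>(v, u). rterm v u (c v (u - ev j))"] by simp
    finally show ?thesis using c inj
      by (intro ReprI[of "g ` supp c"]) (auto simp: g_def tdeg_ev)
  qed
  moreover have "Repr (Suc k) (\<Sum>x\<in>supp c. rterm (fst x) (snd x) (of_nat (lk (fst x) j) * c (fst x) (snd x)))"
    using c by (intro ReprI[of "supp c"]) (auto simp: case_prod_beta)
  ultimately show ?thesis by (simp add: Repr_add)
qed

lemma of_nat_mult_sng: "of_nat n * sng v (k::'k::comm_ring_1) = sng v (of_nat n * k)"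
  by (subst single_of_nat[symmetric]) (simp only: mult_single add_0_left)

lemma X_step:
  "dl j (sng u (sng u (1::'k::field_char_0)) :: ('v::{finite,linorder}, ('v, 'k) mpoly) dop)
     = sng (u + ev j) (sng (u + ev j) 1) + cm (sng 0 (of_nat (lk u j))) (sng u (sng u 1))"
proof -
  have "dl j (sng u (sng u (1::'k)) :: ('v, ('v, 'k) mpoly) dop)
     = sng (ev j + u) (sng (ev j) 1 * sng u 1) + sng u (sng (ev j) 1 * mp_deriv j (sng u 1))"
    by (simp add: dl_def mpd.dd_sng cm_add cm_sng)
  also have "\<dots> = sng (u + ev j) (sng (u + ev j) 1) + cm (sng 0 (of_nat (lk u j))) (sng u (sng u 1))"
    by (simp add: xi_mpd mult_single add.commute cm_sng of_nat_mult_sng)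
  finally show ?thesis .
qed

lemma Repr_X: "Repr (tdeg u) (sng u (sng u (1::'k::field_char_0)) :: ('v::{finite,linorder}, ('v, 'k) mpoly) dop)"
proof (induction u rule: mon_induct)
  case 1
  have S: "(sng 0 (sng 0 1) :: ('v, ('v, 'k) mpoly) dop) = (\<Sum>(v, u)\<in>{(0::'v mon, 0::'v mon)}. rterm v u (1::'k))"
    by (simp add: rterm_def delta_pow_0 cm_sng)
  have T: "\<forall>(v, u)\<in>{(0::'v mon, 0::'v mon)}. tdeg u \<le> 0" by (simp add: tdeg_def)
  have "Repr 0 (sng 0 (sng 0 1) :: ('v, ('v, 'k) mpoly) dop)"
    by (rule ReprI[where S="{(0::'v mon, 0::'v mon)}" and c="\<lambda>_ _. (1::'k)", OF _ T S]) simp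
  then show ?case by (simp add: tdeg_def)
next
  case (2 u j)
  have E: "sng (u + ev j) (sng (u + ev j) (1::'k)) = (dl j (sng u (sng u 1)) + - cm (sng 0 (of_nat (lk u j))) (sng u (sng u 1))
     :: ('v, ('v, 'k) mpoly) dop)"
    by (simp add: X_step)
  have R1: "Repr (Suc (tdeg u)) (dl j (sng u (sng u (1::'k))) :: ('v, ('v, 'k) mpoly) dop)"
    using 2 by (rule Repr_dl)
  have R2: "Repr (Suc (tdeg u)) (- cm (sng 0 (of_nat (lk u j))) (sng u (sng u (1::'k))) :: ('v, ('v, 'k) mpoly) dop)"
    by (rule Repr_neg, rule Repr_scale, rule Repr_mono[OF 2]) simp
  have "Repr (Suc (tdeg u)) (dl j (sng u (sng u (1::'k))) + - cm (sng 0 (of_nat (lk u j))) (sng u (sng u (1::'k))) :: ('v, ('v, 'k) mpoly) dop)"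
    by (rule Repr_add[OF R1 R2])
  then show ?case unfolding tdeg_ev E .
qed

lemma lk_const_mon: "lk (const_mon m :: 'v::finite mon) i = m"
  by (simp add: const_mon_def lookup_sum lookup_single when_def)

lemma mon_le_cancel:
  assumes "\<forall>i. lk u i \<le> lk A i" shows "A + a - u + u = (A + a :: 'v mon)"
  by (rule poly_mapping_eqI) (use assms in \<open>auto simp: lookup_add lookup_minus intro: le_add_diff_inverse2 trans_le_add1\<close>)

lemma Repr_exists:
  fixes P :: "('v::{finite,linorder}, ('v, 'k::field_char_0) mpoly) dop"
  shows "Repr (dop_order P) (cm (sng (const_mon (dop_order P)) 1) P)"
proof -
  let ?m = "dop_order P"
  let ?A = "const_mon ?m :: 'v mon"
  have "cm (sng ?A 1) P = (\<Sum>u\<in>ks P. sng u (sng ?A 1 * lk P u))"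
    by (subst (1) pm_sum_single[of P]) (simp add: cm_sum cm_sng)
  also have "\<dots> = (\<Sum>u\<in>ks P. \<Sum>a\<in>ks (lk P u). sng u (sng (?A + a) (lk (lk P u) a)))"
  proof (rule sum.cong[OF refl])
    fix u
    have "sng ?A 1 * lk P u = sng ?A 1 * (\<Sum>a\<in>ks (lk P u). sng a (lk (lk P u) a))"
      by (subst (1) pm_sum_single[of "lk P u"]) simp
    also have "\<dots> = (\<Sum>a\<in>ks (lk P u). sng (?A + a) (lk (lk P u) a))"
      by (simp add: sum_distrib_left mult_single)
    finally show "sng u (sng ?A 1 * lk P u) = (\<Sum>a\<in>ks (lk P u). sng u (sng (?A + a) (lk (lk P u) a)))"
      by (simp add: sng_sum)
  qed
  finally have E: "cm (sng ?A 1) P = (\<Sum>u\<in>ks P. \<Sum>a\<in>ks (lk P u). sng u (sng (?A + a) (lk (lk P u) a)))" .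
  have "Repr ?m (sng u (sng (?A + a) (lk (lk P u) a)))" if u: "u \<in> ks P" for u a
  proof -
    have td: "tdeg u \<le> ?m" unfolding dop_order_def using u by (auto intro: Max_ge)
    have le: "\<forall>i. lk u i \<le> lk ?A i" using td lk_le_tdeg by (auto simp: lk_const_mon intro: le_trans)
    have "sng u (sng (?A + a) (lk (lk P u) a)) = cm (sng 0 (lk (lk P u) a)) (cm (sng (?A + a - u) 1) (sng u (sng u (1::'k))))"
      by (simp add: cm_sng mult_single mon_le_cancel[OF le])
    moreover have "Repr ?m (cm (sng 0 (lk (lk P u) a)) (cm (sng (?A + a - u) 1) (sng u (sng u (1::'k)))))"
      by (intro Repr_scale Repr_shift Repr_mono[OF Repr_X td])
    ultimately show ?thesis by simp
  qed
  then show ?thesis unfolding E by (intro Repr_sum) auto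
qed

lemma defs_form:
  "pmult (dop_xmon v) (Poly_Mapping.map (\<lambda>a. sng 0 k * a) (delta_pow u)) = rterm v u k"
  by (simp add: dop_xmon_def mpd.dm_const rterm_def cm_def)

lemma map_times: "Poly_Mapping.map ((*) q) R = cm q R"
  by (simp add: cm_def)

lemma pmult_xmon: "pmult (dop_xmon v) P = cm (sng v 1) P"
  by (simp add: dop_xmon_def mpd.dm_const)

lemma ind_coeffs_char:
  fixes P :: "('v::{finite,linorder}, ('v, 'k::field_char_0) mpoly) dop"
  shows "finite (supp (ind_coeffs P)) \<and> cm (sng (const_mon (dop_order P)) 1) P = rsum (ind_coeffs P)"
proof -
  obtain c where c: "finite (supp c)" "\<forall>(v, u)\<in>supp c. tdeg u \<le> dop_order P"
      "cm (sng (const_mon (dop_order P)) 1) P = rsum c"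
    using Repr_exists[of P] unfolding Repr_def by blast
  have "ind_coeffs P = c"
    unfolding ind_coeffs_def
  proof (rule the_equality)
    show "finite {(v, u). c v u \<noteq> 0} \<and> (\<forall>v u. c v u \<noteq> 0 \<longrightarrow> tdeg u \<le> dop_order P) \<and>
      pmult (dop_xmon (const_mon (dop_order P))) P =
        (\<Sum>(v, u)\<in>{(v, u). c v u \<noteq> 0}. pmult (dop_xmon v) (Poly_Mapping.map (\<lambda>a. sng 0 (c v u) * a) (delta_pow u)))"
      using c by (auto simp: map_times pmult_xmon rterm_def rsum_def supp_def)
  next
    fix c' :: "'v mon \<Rightarrow> 'v mon \<Rightarrow> 'k"
    assume "finite {(v, u). c' v u \<noteq> 0} \<and> (\<forall>v u. c' v u \<noteq> 0 \<longrightarrow> tdeg u \<le> dop_order P) \<and>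
      pmult (dop_xmon (const_mon (dop_order P))) P =
        (\<Sum>(v, u)\<in>{(v, u). c' v u \<noteq> 0}. pmult (dop_xmon v) (Poly_Mapping.map (\<lambda>a. sng 0 (c' v u) * a) (delta_pow u)))"
    then have "finite (supp c')" "cm (sng (const_mon (dop_order P)) 1) P = rsum c'"
      by (auto simp: map_times pmult_xmon rterm_def rsum_def supp_def)
    then show "c' = c" using c by (intro rsum_unique) auto
  qed
  then show ?thesis using c by simp
qed


definition omin :: "('a \<Rightarrow> 'a \<Rightarrow> bool) \<Rightarrow> 'a set \<Rightarrow> 'a" where
  "omin ord T = (THE v0. v0 \<in> T \<and> (\<forall>v\<in>T. v \<noteq> v0 \<longrightarrow> ord v0 v))"

lemma gto_irrefl: "graded_term_order ord \<Longrightarrow> \<not> ord a a"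
  by (simp add: graded_term_order_def)
lemma gto_trans: "graded_term_order ord \<Longrightarrow> ord a b \<Longrightarrow> ord b c \<Longrightarrow> ord a c"
  unfolding graded_term_order_def by blast
lemma gto_total: "graded_term_order ord \<Longrightarrow> a = b \<or> ord a b \<or> ord b a"
  unfolding graded_term_order_def by blast
lemma gto_add: "graded_term_order ord \<Longrightarrow> ord a b \<Longrightarrow> ord (c + a) (c + b)"
  unfolding graded_term_order_def by (metis add.commute)

lemma omin_ex:
  assumes g: "graded_term_order ord" and "finite T" "T \<noteq> {}"
  shows "\<exists>v0\<in>T. \<forall>v\<in>T. v \<noteq> v0 \<longrightarrow> ord v0 v"
  using assms(2,3)
proof (induction T rule: finite_ne_induct)
  case (singleton x) then show ?case by simp
next
  case (insert x F)
  then obtain m where m: "m \<in> F" "\<forall>v\<in>F. v \<noteq> m \<longrightarrow> ord m v" by blast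
  show ?case
  proof (cases "ord x m")
    case True
    have "\<forall>v\<in>insert x F. v \<noteq> x \<longrightarrow> ord x v"
    proof (intro ballI impI)
      fix v assume v: "v \<in> insert x F" "v \<noteq> x"
      then have vF: "v \<in> F" by simp
      show "ord x v"
      proof (cases "v = m")
        case True with \<open>ord x m\<close> show ?thesis by simp
      next
        case False
        then have "ord m v" using m vF by blast
        then show ?thesis using \<open>ord x m\<close> gto_trans[OF g] by blast
      qed
    qed
    then show ?thesis by blast
  next
    case False
    then have "x = m \<or> ord m x" using gto_total[OF g, of x m] by blast
    then have "x \<noteq> m \<Longrightarrow> ord m x" by blast
    moreover have "x \<noteq> m" using insert m by blast
    ultimately have "\<forall>v\<in>insert x F. v \<noteq> m \<longrightarrow> ord m v" using m by blast
    then show ?thesis using m by blast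
  qed
qed

lemma omin_eq:
  assumes g: "graded_term_order ord" and "v0 \<in> T" "\<forall>v\<in>T. v \<noteq> v0 \<longrightarrow> ord v0 v"
  shows "omin ord T = v0"
  unfolding omin_def
proof (rule the_equality)
  show "v0 \<in> T \<and> (\<forall>v\<in>T. v \<noteq> v0 \<longrightarrow> ord v0 v)" using assms by blast
next
  fix w assume w: "w \<in> T \<and> (\<forall>v\<in>T. v \<noteq> w \<longrightarrow> ord w v)"
  show "w = v0"
  proof (rule ccontr)
    assume "w \<noteq> v0"
    then have "ord w v0" "ord v0 w" using w assms by auto
    then show False using gto_trans[OF g] gto_irrefl[OF g] by blast
  qed
qed

lemma omin_prop:
  assumes g: "graded_term_order ord" and "finite T" "T \<noteq> {}"
  shows "omin ord T \<in> T \<and> (\<forall>v\<in>T. v \<noteq> omin ord T \<longrightarrow> ord (omin ord T) v)"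
proof -
  obtain v0 where "v0 \<in> T" "\<forall>v\<in>T. v \<noteq> v0 \<longrightarrow> ord v0 v" using omin_ex[OF assms] by blast
  moreover then have "omin ord T = v0" by (intro omin_eq[OF g])
  ultimately show ?thesis by simp
qed

definition rows :: "('a \<Rightarrow> 'b \<Rightarrow> 'k::zero) \<Rightarrow> 'a set" where
  "rows c = {v. \<exists>u. c v u \<noteq> 0}"

lemma rows_supp: "rows c = fst ` supp c"
  by (force simp: rows_def supp_def)

lemma finite_rows: "finite (supp c) \<Longrightarrow> finite (rows c)"
  by (simp add: rows_supp)

lemma finite_row: "finite (supp c) \<Longrightarrow> finite {u. c v u \<noteq> 0}"
  by (rule finite_subset[of _ "snd ` supp c"]) (force simp: supp_def)+

lemma lk_toPM:
  assumes "finite {u. f u \<noteq> 0}"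
  shows "lk (\<Sum>u\<in>{u. f u \<noteq> 0}. sng u (f u)) w = f w"
  using assms by (simp add: lookup_sum lookup_single when_def)

lemma ind_unfold:
  "ind ord P = (if P = 0 then 0 else
     (\<Sum>u\<in>{u. ind_coeffs P (omin ord (rows (ind_coeffs P))) u \<noteq> 0}.
         sng u (ind_coeffs P (omin ord (rows (ind_coeffs P))) u)))"
  by (simp add: ind_def omin_def rows_def Let_def)

definition sh :: "'v mon \<Rightarrow> ('v mon \<Rightarrow> 'v mon \<Rightarrow> 'k::zero) \<Rightarrow> 'v mon \<Rightarrow> 'v mon \<Rightarrow> 'k" where
  "sh a c v u = (if \<exists>v'. v = a + v' then c (v - a) u else 0)"

lemma sh_at [simp]: "sh a c (a + v) u = c v u"
  by (auto simp: sh_def)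

lemma supp_sh: "supp (sh a c) \<subseteq> (\<lambda>(v, u). (a + v, u)) ` supp c"
proof
  fix x assume "x \<in> supp (sh a c)"
  then obtain v u where x: "x = (v, u)" "sh a c v u \<noteq> 0" by (auto simp: supp_def)
  then obtain v' where v: "v = a + v'" by (auto simp: sh_def split: if_splits)
  then have "c v' u \<noteq> 0" using x by simp
  then show "x \<in> (\<lambda>(v, u). (a + v, u)) ` supp c" using x v by (force simp: supp_def)
qed

lemma finite_supp_sh: "finite (supp c) \<Longrightarrow> finite (supp (sh a c))"
  by (rule finite_subset[OF supp_sh]) simp

lemma rsum_shift:
  fixes c :: "'v::{finite,linorder} mon \<Rightarrow> 'v mon \<Rightarrow> 'k::field_char_0"
  assumes fin: "finite (supp c)"
  shows "cm (sng a 1) (rsum c) = rsum (sh a c)"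
proof -
  define g where "g = (\<lambda>(v::'v mon, u::'v mon). (a + v, u))"
  have inj: "inj_on g (supp c)" by (auto simp: g_def inj_on_def)
  have "cm (sng a 1) (rsum c) = (\<Sum>x\<in>supp c. rterm (a + fst x) (snd x) (c (fst x) (snd x)))"
    by (simp add: rsum_def cm_sum rterm_shift case_prod_beta)
  also have "\<dots> = (\<Sum>x\<in>supp c. (\<lambda>(v, u). rterm v u (sh a c v u)) (g x))"
    by (rule sum.cong) (auto simp: g_def)
  also have "\<dots> = (\<Sum>(v, u)\<in>g ` supp c. rterm v u (sh a c v u))"
    using sum.reindex[OF inj, of "\<lambda>(v, u). rterm v u (sh a c v u)"] by simp
  also have "\<dots> = rsum (sh a c)"
    using fin supp_sh[of a c] by (intro rsum_sup[symmetric]) (auto simp: g_def)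
  finally show ?thesis .
qed

lemma rsum_zero_fun: "rsum (\<lambda>_ _. 0) = 0"
  by (simp add: rsum_def supp_def)

lemma rows_sh: "rows (sh a c) = (\<lambda>v. a + v) ` rows c"
proof (intro equalityI subsetI)
  fix x assume "x \<in> rows (sh a c)"
  then obtain u where "sh a c x u \<noteq> 0" by (auto simp: rows_def)
  then obtain v' where "x = a + v'" "c v' u \<noteq> 0" by (auto simp: sh_def split: if_splits)
  then show "x \<in> (\<lambda>v. a + v) ` rows c" by (auto simp: rows_def)
next
  fix x assume "x \<in> (\<lambda>v. a + v) ` rows c"
  then show "x \<in> rows (sh a c)" by (auto simp: rows_def)
qed

lemma omin_shift:
  assumes g: "graded_term_order ord" and "finite T" "T \<noteq> {}"
  shows "omin ord ((\<lambda>v. a + v) ` T) = a + omin ord T"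
proof -
  have p: "omin ord T \<in> T" "\<forall>v\<in>T. v \<noteq> omin ord T \<longrightarrow> ord (omin ord T) v"
    using omin_prop[OF assms] by auto
  show ?thesis
    by (rule omin_eq[OF g]) (use p gto_add[OF g] in auto)
qed

lemma ind_rep:
  fixes P :: "('v::{finite,linorder}, ('v, 'k::field_char_0) mpoly) dop"
    and c :: "'v mon \<Rightarrow> 'v mon \<Rightarrow> 'k"
  assumes g: "graded_term_order ord" and fin: "finite (supp c)"
    and rep: "cm (sng a 1) P = rsum c" and nz: "rows c \<noteq> {}"
  shows "P \<noteq> 0 \<and> (\<forall>w. lk (ind ord P) w = c (omin ord (rows c)) w)"
proof -
  have P0: "P \<noteq> 0"
  proof
    assume "P = 0"
    then have "rsum c = rsum (\<lambda>_ _. 0 :: 'k)" using rep by (simp add: rsum_zero_fun)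
    then have "c = (\<lambda>_ _. 0)" using fin by (intro rsum_unique) (auto simp: supp_def)
    then show False using nz by (simp add: rows_def)
  qed
  let ?c0 = "ind_coeffs P"
  let ?A = "const_mon (dop_order P) :: 'v mon"
  have fin0: "finite (supp ?c0)" and rep0: "cm (sng ?A 1) P = rsum ?c0"
    using ind_coeffs_char[of P] by auto
  have "rsum (sh a ?c0) = rsum (sh ?A c)"
  proof -
    have "rsum (sh a ?c0) = cm (sng a 1) (cm (sng ?A 1) P)" using rep0 rsum_shift[OF fin0] by simp
    also have "\<dots> = cm (sng ?A 1) (cm (sng a 1) P)" by (simp add: cm_cm mult_single add.commute)
    also have "\<dots> = rsum (sh ?A c)" using rep rsum_shift[OF fin] by simp
    finally show ?thesis .
  qed
  then have eqsh: "sh a ?c0 = sh ?A c"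
    using fin fin0 by (intro rsum_unique finite_supp_sh)
  then have "(\<lambda>v. a + v) ` rows ?c0 = (\<lambda>v. ?A + v) ` rows c" by (metis rows_sh)
  then have ne0: "rows ?c0 \<noteq> {}" using nz by auto
  have e: "a + omin ord (rows ?c0) = ?A + omin ord (rows c)"
    using omin_shift[OF g finite_rows[OF fin0] ne0, of a] omin_shift[OF g finite_rows[OF fin] nz, of ?A]
      rows_sh[of a ?c0] rows_sh[of ?A c] eqsh by simp
  have row: "?c0 (omin ord (rows ?c0)) w = c (omin ord (rows c)) w" for w
  proof -
    have "?c0 (omin ord (rows ?c0)) w = sh a ?c0 (a + omin ord (rows ?c0)) w" by simp
    also have "\<dots> = sh ?A c (a + omin ord (rows ?c0)) w" using eqsh by simp
    also have "\<dots> = sh ?A c (?A + omin ord (rows c)) w" by (simp only: e)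
    also have "\<dots> = c (omin ord (rows c)) w" by simp
    finally show ?thesis .
  qed
  have "lk (ind ord P) w = c (omin ord (rows c)) w" for w
    using P0 by (simp add: ind_unfold lk_toPM finite_row[OF fin0] finite_row[OF fin] row)
  then show ?thesis using P0 by blast
qed


lemma lk_embed: "lk (dop_embed P) w = Fract (lk P w) 1"
  by (simp add: dop_embed_def map.rep_eq when_def fract_collapse)

lemma Fract_add1: "Fract (a + b) 1 = Fract a 1 + Fract (b::'a::idom) 1"
  by simp

lemma embed_add: "dop_embed (P + Q) = dop_embed P + dop_embed Q"
  by (rule poly_mapping_eqI) (simp add: lk_embed lookup_add)

lemma embed_cm: "dop_embed (cm q P) = cm (Fract q 1) (dop_embed P)"
  by (rule poly_mapping_eqI) (simp add: lk_embed)

lemma embed_dd: "dop_embed (mpd.dd j P) = rfd.dd j (dop_embed P)"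
  by (rule poly_mapping_eqI) (simp add: lk_embed mpd.dd_lookup rfd.dd_lookup rf_Fract1 fract_collapse)

lemma embed_dl: "dop_embed (dl j P) = cm (Fract (sng (ev j) 1) 1) (rfd.dd j (dop_embed P))"
  by (simp add: dl_def embed_cm embed_dd)

lemma L_zero: "0 \<in> rat_left_ideal G"
  unfolding rat_left_ideal_def by (rule CollectI, rule exI[of _ "{}"]) simp

lemma L_add:
  assumes "X \<in> rat_left_ideal G" "Y \<in> rat_left_ideal G"
  shows "X + Y \<in> rat_left_ideal G"
proof -
  obtain S1 Q1 where 1: "finite S1" "S1 \<subseteq> G" "X = (\<Sum>g\<in>S1. dop_mult rf_deriv (Q1 g) (dop_embed g))"
    using assms(1) unfolding rat_left_ideal_def by blast
  obtain S2 Q2 where 2: "finite S2" "S2 \<subseteq> G" "Y = (\<Sum>g\<in>S2. dop_mult rf_deriv (Q2 g) (dop_embed g))"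
    using assms(2) unfolding rat_left_ideal_def by blast
  define Q where "Q g = (if g \<in> S1 then Q1 g else 0) + (if g \<in> S2 then Q2 g else 0)" for g
  have e1: "(\<Sum>g\<in>S1 \<union> S2. dop_mult rf_deriv (if g \<in> S1 then Q1 g else 0) (dop_embed g)) = X"
    unfolding 1(3) using 1 2 by (intro sum.mono_neutral_cong_right) auto
  have e2: "(\<Sum>g\<in>S1 \<union> S2. dop_mult rf_deriv (if g \<in> S2 then Q2 g else 0) (dop_embed g)) = Y"
    unfolding 2(3) using 1 2 by (intro sum.mono_neutral_cong_right) auto
  have "X + Y = (\<Sum>g\<in>S1 \<union> S2. dop_mult rf_deriv (Q g) (dop_embed g))"
    unfolding Q_def rfd.dm_add1 sum.distrib e1 e2 ..
  then show ?thesis unfolding rat_left_ideal_def using 1 2 by blast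
qed

lemma L_cm:
  assumes "X \<in> rat_left_ideal G" shows "cm q X \<in> rat_left_ideal G"
proof -
  obtain S Q where 1: "finite S" "S \<subseteq> G" "X = (\<Sum>g\<in>S. dop_mult rf_deriv (Q g) (dop_embed g))"
    using assms unfolding rat_left_ideal_def by blast
  have e: "cm q X = (\<Sum>g\<in>S. dop_mult rf_deriv ((\<lambda>g. cm q (Q g)) g) (dop_embed g))"
    unfolding 1(3) cm_sum rfd.dm_cm1 ..
  show ?thesis unfolding rat_left_ideal_def
    by (rule CollectI, rule exI[of _ S], rule exI[of _ "\<lambda>g. cm q (Q g)"]) (use 1 e in blast)
qed

lemma L_dd:
  assumes "X \<in> rat_left_ideal G" shows "rfd.dd j X \<in> rat_left_ideal G"
proof -
  obtain S Q where 1: "finite S" "S \<subseteq> G" "X = (\<Sum>g\<in>S. dop_mult rf_deriv (Q g) (dop_embed g))"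
    using assms unfolding rat_left_ideal_def by blast
  have e: "rfd.dd j X = (\<Sum>g\<in>S. dop_mult rf_deriv ((\<lambda>g. rfd.dd j (Q g)) g) (dop_embed g))"
    unfolding 1(3) rfd.dd_sum rfd.dd_assoc ..
  show ?thesis unfolding rat_left_ideal_def
    by (rule CollectI, rule exI[of _ S], rule exI[of _ "\<lambda>g. rfd.dd j (Q g)"]) (use 1 e in blast)
qed

lemma E_cm: "dop_embed P \<in> rat_left_ideal G \<Longrightarrow> dop_embed (cm q P) \<in> rat_left_ideal G"
  unfolding embed_cm by (rule L_cm)
lemma E_add: "dop_embed P \<in> rat_left_ideal G \<Longrightarrow> dop_embed Q \<in> rat_left_ideal G \<Longrightarrow> dop_embed (P + Q) \<in> rat_left_ideal G"
  unfolding embed_add by (rule L_add)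
lemma E_dl: "dop_embed P \<in> rat_left_ideal G \<Longrightarrow> dop_embed (dl j P) \<in> rat_left_ideal G"
  unfolding embed_dl by (intro L_cm L_dd)


lemma ind_zero [simp]: "ind ord 0 = 0"
  by (simp add: ind_def)

lemma embed_zero [simp]: "dop_embed 0 = 0"
  by (rule poly_mapping_eqI) (simp add: lk_embed fract_collapse)

lemma cm_xmon_zero:
  fixes P :: "('v::{finite,linorder}, ('v, 'k::field_char_0) mpoly) dop"
  assumes "cm (sng a 1) P = 0" shows "P = 0"
proof (rule poly_mapping_eqI)
  fix w
  have "sng a 1 * lk P w = 0" using arg_cong[OF assms, of "\<lambda>X. lk X w"] by simp
  moreover have "sng a (1::'k) \<noteq> 0" by (metis lookup_single_eq one_neq_zero lookup_zero)
  ultimately show "lk P w = lk 0 w" by simp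
qed

lemma rsum_rows_empty: "rows c = {} \<Longrightarrow> rsum c = 0"
  by (simp add: rsum_def rows_supp)

lemma rep_of:
  fixes P :: "('v::{finite,linorder}, ('v, 'k::field_char_0) mpoly) dop"
  assumes "P \<noteq> 0"
  shows "finite (supp (ind_coeffs P)) \<and> cm (sng (const_mon (dop_order P)) 1) P = rsum (ind_coeffs P)
     \<and> rows (ind_coeffs P) \<noteq> {}"
proof -
  have 1: "finite (supp (ind_coeffs P))" "cm (sng (const_mon (dop_order P)) 1) P = rsum (ind_coeffs P)"
    using ind_coeffs_char[of P] by auto
  have "rows (ind_coeffs P) \<noteq> {}"
  proof
    assume "rows (ind_coeffs P) = {}"
    then have "cm (sng (const_mon (dop_order P)) 1) P = 0" using 1 rsum_rows_empty by simp
    then show False using cm_xmon_zero assms by blast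
  qed
  then show ?thesis using 1 by blast
qed

lemma rsum_add:
  fixes c1 c2 :: "'v::{finite,linorder} mon \<Rightarrow> 'v mon \<Rightarrow> 'k::field_char_0"
  assumes "finite (supp c1)" "finite (supp c2)"
  shows "rsum c1 + rsum c2 = rsum (\<lambda>v u. c1 v u + c2 v u) \<and> finite (supp (\<lambda>v u. c1 v u + c2 v u))"
proof -
  let ?S = "supp c1 \<union> supp c2"
  have sub: "supp (\<lambda>v u. c1 v u + c2 v u) \<subseteq> ?S" by (auto simp: supp_def)
  have "rsum c1 + rsum c2 = (\<Sum>(v, u)\<in>?S. rterm v u (c1 v u + c2 v u))"
    using assms by (simp add: rsum_sup[of ?S c1] rsum_sup[of ?S c2] rterm_add case_prod_beta sum.distrib)
  also have "\<dots> = rsum (\<lambda>v u. c1 v u + c2 v u)"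
    using assms sub by (intro rsum_sup[symmetric]) auto
  finally show ?thesis using assms sub by (auto intro: finite_subset)
qed

lemma cm_scal_rsum:
  fixes c :: "'v::{finite,linorder} mon \<Rightarrow> 'v mon \<Rightarrow> 'k::field_char_0"
  shows "cm (sng 0 s) (rsum c) = (\<Sum>(v, u)\<in>supp c. rterm v u (s * c v u))"
  by (simp add: rsum_def cm_sum rterm_scale case_prod_beta)

lemma lk_scal: "lk (sng 0 k * p) w = k * lk (p :: ('v, 'k::comm_ring_1) mpoly) w"
  by (simp add: mult_map_scale_conv_mult[symmetric] map.rep_eq when_def)

lemma lk_evmult: "lk (sng (ev j) 1 * p) w = (if 0 < lk w j then lk (p :: ('v, 'k::comm_ring_1) mpoly) (w - ev j) else 0)"
proof -
  have "sng (ev j) 1 * p = (\<Sum>b\<in>ks p. sng (ev j + b) (lk p b))"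
    by (subst (1) pm_sum_single[of p]) (simp add: sum_distrib_left mult_single)
  then have "lk (sng (ev j) 1 * p) w = (\<Sum>b\<in>ks p. (if ev j + b = w then lk p b else 0))"
    by (simp add: lookup_sum lookup_single when_def)
  also have "\<dots> = (\<Sum>b\<in>ks p. (if b = w - ev j then (if 0 < lk w j then lk p b else 0) else 0))"
    by (rule sum.cong) (auto simp: ev_add_eq)
  also have "\<dots> = (if 0 < lk w j then lk p (w - ev j) else 0)"
    by (simp add: in_keys_iff)
  finally show ?thesis .
qed


lemma I_add:
  fixes P1 P2 :: "('v::{finite,linorder}, ('v, 'k::field_char_0) mpoly) dop"
  assumes g: "graded_term_order ord" and e1: "dop_embed P1 \<in> rat_left_ideal G"
    and e2: "dop_embed P2 \<in> rat_left_ideal G"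
  shows "\<exists>R. dop_embed R \<in> rat_left_ideal G \<and> ind ord R = ind ord P1 + ind ord P2"
proof (cases "P1 = 0 \<or> P2 = 0 \<or> ind ord P1 + ind ord P2 = 0")
  case True
  then show ?thesis
  proof (elim disjE)
    assume "P1 = 0" then show ?thesis using e2 by auto
  next
    assume "P2 = 0" then show ?thesis using e1 by auto
  next
    assume "ind ord P1 + ind ord P2 = 0" then show ?thesis
      by (intro exI[of _ 0]) (simp add: L_zero)
  qed
next
  case False
  then have n1: "P1 \<noteq> 0" and n2: "P2 \<noteq> 0" and nz: "ind ord P1 + ind ord P2 \<noteq> 0" by auto
  define c1 where "c1 = ind_coeffs P1"
  define c2 where "c2 = ind_coeffs P2"
  define A1 where "A1 = (const_mon (dop_order P1) :: 'v mon)"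
  define A2 where "A2 = (const_mon (dop_order P2) :: 'v mon)"
  have r1: "finite (supp c1)" "cm (sng A1 1) P1 = rsum c1" "rows c1 \<noteq> {}"
    using rep_of[OF n1] by (auto simp: c1_def A1_def)
  have r2: "finite (supp c2)" "cm (sng A2 1) P2 = rsum c2" "rows c2 \<noteq> {}"
    using rep_of[OF n2] by (auto simp: c2_def A2_def)
  define v1 where "v1 = omin ord (rows c1)"
  define v2 where "v2 = omin ord (rows c2)"
  have i1: "lk (ind ord P1) w = c1 v1 w" for w using ind_rep[OF g r1] by (simp add: v1_def)
  have i2: "lk (ind ord P2) w = c2 v2 w" for w using ind_rep[OF g r2] by (simp add: v2_def)
  have m1: "v1 \<in> rows c1" "\<forall>v\<in>rows c1. v \<noteq> v1 \<longrightarrow> ord v1 v"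
    using omin_prop[OF g finite_rows[OF r1(1)] r1(3)] by (auto simp: v1_def)
  have m2: "v2 \<in> rows c2" "\<forall>v\<in>rows c2. v \<noteq> v2 \<longrightarrow> ord v2 v"
    using omin_prop[OF g finite_rows[OF r2(1)] r2(3)] by (auto simp: v2_def)
  define s1 where "s1 = v2 + A1 + A2"
  define s2 where "s2 = v1 + A2 + A1"
  define R where "R = cm (sng (v2 + A1) 1) P1 + cm (sng (v1 + A2) 1) P2"
  define c where "c = (\<lambda>v u. sh s1 c1 v u + sh s2 c2 v u)"
  define V where "V = s1 + v1"
  have V2: "V = s2 + v2" by (simp add: V_def s1_def s2_def add_ac)
  have fs1: "finite (supp (sh s1 c1))" "finite (supp (sh s2 c2))"
    using r1 r2 by (auto intro: finite_supp_sh)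
  have rc: "rsum (sh s1 c1) + rsum (sh s2 c2) = rsum c" "finite (supp c)"
    using rsum_add[OF fs1] by (auto simp: c_def)
  have repR: "cm (sng (A1 + A2) 1) R = rsum c"
  proof -
    have "cm (sng (A1 + A2) 1) (cm (sng (v2 + A1) 1) P1) = cm (sng s1 1) (cm (sng A1 1) P1)"
      by (simp add: cm_cm mult_single s1_def add_ac)
    also have "\<dots> = rsum (sh s1 c1)" using r1 rsum_shift by simp
    finally have a: "cm (sng (A1 + A2) 1) (cm (sng (v2 + A1) 1) P1) = rsum (sh s1 c1)" .
    have "cm (sng (A1 + A2) 1) (cm (sng (v1 + A2) 1) P2) = cm (sng s2 1) (cm (sng A2 1) P2)"
      by (simp add: cm_cm mult_single s2_def add_ac)
    also have "\<dots> = rsum (sh s2 c2)" using r2 rsum_shift by simp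
    finally have b: "cm (sng (A1 + A2) 1) (cm (sng (v1 + A2) 1) P2) = rsum (sh s2 c2)" .
    show ?thesis unfolding R_def cm_add a b rc(1) ..
  qed
  have cV: "c V w = c1 v1 w + c2 v2 w" for w
  proof -
    have "sh s1 c1 V w = c1 v1 w" by (simp add: V_def)
    moreover have "sh s2 c2 V w = c2 v2 w" by (simp add: V2)
    ultimately show ?thesis by (simp add: c_def)
  qed
  obtain w0 where "lk (ind ord P1 + ind ord P2) w0 \<noteq> 0" using nz by (metis lookup_zero poly_mapping_eqI)
  then have "c V w0 \<noteq> 0" by (simp add: lookup_add i1 i2 cV)
  then have Vr: "V \<in> rows c" by (auto simp: rows_def)
  have Vmin: "\<forall>v\<in>rows c. v \<noteq> V \<longrightarrow> ord V v"
  proof (intro ballI impI)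
    fix v assume v: "v \<in> rows c" "v \<noteq> V"
    then obtain u where "c v u \<noteq> 0" by (auto simp: rows_def)
    then have "sh s1 c1 v u \<noteq> 0 \<or> sh s2 c2 v u \<noteq> 0" by (auto simp: c_def)
    then show "ord V v"
    proof
      assume "sh s1 c1 v u \<noteq> 0"
      then have "v \<in> rows (sh s1 c1)" by (auto simp: rows_def)
      then obtain v' where v': "v = s1 + v'" "v' \<in> rows c1" by (auto simp: rows_sh)
      then have "v' \<noteq> v1" using v by (auto simp: V_def)
      then have "ord v1 v'" using m1 v' by blast
      then show "ord V v" using gto_add[OF g] v' by (simp add: V_def)
    next
      assume "sh s2 c2 v u \<noteq> 0"
      then have "v \<in> rows (sh s2 c2)" by (auto simp: rows_def)
      then obtain v' where v': "v = s2 + v'" "v' \<in> rows c2" by (auto simp: rows_sh)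
      then have "v' \<noteq> v2" using v by (auto simp: V2)
      then have "ord v2 v'" using m2 v' by blast
      then show "ord V v" using gto_add[OF g] v' by (simp add: V2)
    qed
  qed
  have om: "omin ord (rows c) = V" by (rule omin_eq[OF g Vr Vmin])
  have "rows c \<noteq> {}" using Vr by blast
  then have iR: "lk (ind ord R) w = c V w" for w using ind_rep[OF g rc(2) repR] om by simp
  have "ind ord R = ind ord P1 + ind ord P2"
    by (rule poly_mapping_eqI) (simp add: iR cV lookup_add i1 i2)
  moreover have "dop_embed R \<in> rat_left_ideal G"
    unfolding R_def by (intro E_add E_cm e1 e2)
  ultimately show ?thesis by blast
qed

lemma I_scale:
  fixes P :: "('v::{finite,linorder}, ('v, 'k::field_char_0) mpoly) dop"
  assumes g: "graded_term_order ord" and e: "dop_embed P \<in> rat_left_ideal G"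
  shows "\<exists>R. dop_embed R \<in> rat_left_ideal G \<and> ind ord R = sng 0 k * ind ord P"
proof (cases "P = 0 \<or> k = 0")
  case True
  then show ?thesis by (intro exI[of _ 0]) (auto simp: L_zero)
next
  case False
  then have n: "P \<noteq> 0" and k: "k \<noteq> 0" by auto
  define c where "c = ind_coeffs P"
  define A where "A = (const_mon (dop_order P) :: 'v mon)"
  have r: "finite (supp c)" "cm (sng A 1) P = rsum c" "rows c \<noteq> {}"
    using rep_of[OF n] by (auto simp: c_def A_def)
  define R where "R = cm (sng 0 k) P"
  define c' where "c' = (\<lambda>v u. k * c v u)"
  have sc: "supp c' = supp c" "rows c' = rows c" using k by (auto simp: c'_def supp_def rows_def)
  have "cm (sng A 1) R = cm (sng 0 k) (rsum c)"
    by (simp add: R_def r(2)[symmetric] cm_cm mult.commute)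
  also have "\<dots> = rsum c'" unfolding cm_scal_rsum rsum_def[of c'] sc(1) by (simp add: c'_def)
  finally have repR: "cm (sng A 1) R = rsum c'" .
  have iP: "lk (ind ord P) w = c (omin ord (rows c)) w" for w using ind_rep[OF g r] by simp
  have iR: "lk (ind ord R) w = c' (omin ord (rows c)) w" for w
    using ind_rep[OF g _ repR] r sc by simp
  have "ind ord R = sng 0 k * ind ord P"
    by (rule poly_mapping_eqI) (simp add: iR iP lk_scal c'_def)
  moreover have "dop_embed R \<in> rat_left_ideal G" unfolding R_def by (rule E_cm[OF e])
  ultimately show ?thesis by blast
qed


lemma I_ev:
  fixes P :: "('v::{finite,linorder}, ('v, 'k::field_char_0) mpoly) dop"
  assumes g: "graded_term_order ord" and e: "dop_embed P \<in> rat_left_ideal G"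
  shows "\<exists>R. dop_embed R \<in> rat_left_ideal G \<and> ind ord R = sng (ev j) 1 * ind ord P"
proof (cases "P = 0")
  case True
  then show ?thesis by (intro exI[of _ 0]) (auto simp: L_zero)
next
  case False
  define c where "c = ind_coeffs P"
  define A where "A = (const_mon (dop_order P) :: 'v mon)"
  have r: "finite (supp c)" "cm (sng A 1) P = rsum c" "rows c \<noteq> {}"
    using rep_of[OF False] by (auto simp: c_def A_def)
  define v0 where "v0 = omin ord (rows c)"
  have m0: "v0 \<in> rows c" "\<forall>v\<in>rows c. v \<noteq> v0 \<longrightarrow> ord v0 v"
    using omin_prop[OF g finite_rows[OF r(1)] r(3)] by (auto simp: v0_def)
  define d where "d = (of_nat (lk A j) - of_nat (lk v0 j) :: 'k)"
  define R where "R = dl j P + cm (sng 0 d) P"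
  define c1 where "c1 = (\<lambda>v u. if 0 < lk u j then c v (u - ev j) else 0)"
  define c2 where "c2 = (\<lambda>v u. (of_nat (lk v j) - of_nat (lk v0 j)) * c v u)"
  define c' where "c' = (\<lambda>v u. c1 v u + c2 v u)"
  define g' where "g' = (\<lambda>(v::'v mon, u::'v mon). (v, u + ev j))"
  have inj: "inj_on g' (supp c)" by (auto simp: g'_def inj_on_def)
  have supp1: "supp c1 \<subseteq> g' ` supp c"
  proof
    fix x assume "x \<in> supp c1"
    then obtain v u where x: "x = (v, u)" "0 < lk u j" "c v (u - ev j) \<noteq> 0"
      by (auto simp: supp_def c1_def split: if_splits)
    then have "(v, u - ev j) \<in> supp c" by (simp add: supp_def)
    moreover have "g' (v, u - ev j) = x" using x mon_m3[of u j] by (simp add: g'_def)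
    ultimately show "x \<in> g' ` supp c" by force
  qed
  have fin1: "finite (supp c1)" using supp1 r(1) by (auto intro: finite_subset)
  have supp2: "supp c2 \<subseteq> supp c" by (auto simp: supp_def c2_def)
  have fin2: "finite (supp c2)" using supp2 r(1) by (auto intro: finite_subset)
  have T1: "(\<Sum>x\<in>supp c. rterm (fst x) (snd x + ev j) (c (fst x) (snd x))) = rsum c1"
  proof -
    have "(\<Sum>x\<in>supp c. rterm (fst x) (snd x + ev j) (c (fst x) (snd x)))
        = (\<Sum>x\<in>supp c. (\<lambda>(v, u). rterm v u (c1 v u)) (g' x))"
      by (rule sum.cong) (auto simp: g'_def c1_def lookup_add lk_ev)
    also have "\<dots> = (\<Sum>(v, u)\<in>g' ` supp c. rterm v u (c1 v u))"
      using sum.reindex[OF inj, of "\<lambda>(v, u). rterm v u (c1 v u)"] by simp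
    also have "\<dots> = rsum c1"
      using r(1) supp1 by (intro rsum_sup[symmetric]) auto
    finally show ?thesis .
  qed
  have dlrs: "dl j (rsum c) = (\<Sum>x\<in>supp c. rterm (fst x) (snd x + ev j) (c (fst x) (snd x)))
      + (\<Sum>x\<in>supp c. rterm (fst x) (snd x) (of_nat (lk (fst x) j) * c (fst x) (snd x)))"
    by (simp add: rsum_def dl_sum rterm_dl case_prod_beta sum.distrib)
  have s1: "cm (sng A 1) (dl j P) = dl j (rsum c) - cm (sng 0 (of_nat (lk A j))) (rsum c)"
    using dl_xmon[of j A P] r(2) by (simp add: eq_diff_eq)
  have s2: "cm (sng A 1) (cm (sng 0 d) P) = cm (sng 0 d) (rsum c)"
    unfolding r(2)[symmetric] by (simp add: cm_cm mult.commute)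
  have comb: "(\<Sum>x\<in>supp c. rterm (fst x) (snd x) (of_nat (lk (fst x) j) * c (fst x) (snd x)))
      - cm (sng 0 (of_nat (lk A j))) (rsum c) + cm (sng 0 d) (rsum c) = rsum c2"
  proof -
    have "(\<Sum>x\<in>supp c. rterm (fst x) (snd x) (of_nat (lk (fst x) j) * c (fst x) (snd x)))
      - cm (sng 0 (of_nat (lk A j))) (rsum c) + cm (sng 0 d) (rsum c)
      = (\<Sum>x\<in>supp c. rterm (fst x) (snd x) (of_nat (lk (fst x) j) * c (fst x) (snd x)
          - of_nat (lk A j) * c (fst x) (snd x) + d * c (fst x) (snd x)))"
      unfolding cm_scal_rsum by (simp add: rterm_add rterm_diff sum.distrib sum_subtractf case_prod_beta)
    also have "\<dots> = (\<Sum>x\<in>supp c. rterm (fst x) (snd x) (c2 (fst x) (snd x)))"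
      by (rule sum.cong) (simp_all add: c2_def d_def algebra_simps)
    also have "\<dots> = rsum c2"
      using r(1) supp2 by (subst rsum_sup[of "supp c"]) (auto simp: case_prod_beta)
    finally show ?thesis .
  qed
  have repR: "cm (sng A 1) R = rsum c'"
  proof -
    have "cm (sng A 1) R = rsum c1 + ((\<Sum>x\<in>supp c. rterm (fst x) (snd x) (of_nat (lk (fst x) j) * c (fst x) (snd x)))
      - cm (sng 0 (of_nat (lk A j))) (rsum c) + cm (sng 0 d) (rsum c))"
      unfolding R_def cm_add s1 s2 dlrs T1 by (simp add: algebra_simps)
    also have "\<dots> = rsum c'" unfolding comb using rsum_add[OF fin1 fin2] by (simp add: c'_def)
    finally show ?thesis .
  qed
  have finc': "finite (supp c')" using rsum_add[OF fin1 fin2] by (simp add: c'_def)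
  have rows': "rows c' \<subseteq> rows c"
  proof
    fix v assume "v \<in> rows c'"
    then obtain u where "c' v u \<noteq> 0" by (auto simp: rows_def)
    then have "c1 v u \<noteq> 0 \<or> c2 v u \<noteq> 0" by (auto simp: c'_def)
    then show "v \<in> rows c"
    proof
      assume "c1 v u \<noteq> 0"
      then have "c v (u - ev j) \<noteq> 0" by (simp add: c1_def split: if_splits)
      then show ?thesis by (auto simp: rows_def)
    next
      assume "c2 v u \<noteq> 0"
      then have "c v u \<noteq> 0" by (simp add: c2_def)
      then show ?thesis by (auto simp: rows_def)
    qed
  qed
  obtain u0 where u0: "c v0 u0 \<noteq> 0" using m0(1) by (auto simp: rows_def)
  have "c' v0 (u0 + ev j) = c v0 u0"
    by (simp add: c'_def c1_def c2_def lookup_add lk_ev)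
  then have v0r: "v0 \<in> rows c'" using u0 unfolding rows_def by (intro CollectI exI[of _ "u0 + ev j"]) simp
  have om: "omin ord (rows c') = v0"
    by (rule omin_eq[OF g v0r]) (use rows' m0 in blast)
  have iR: "lk (ind ord R) w = c' v0 w" for w
    using ind_rep[OF g finc' repR] v0r om by auto
  have iP: "lk (ind ord P) w = c v0 w" for w
    using ind_rep[OF g r] by (simp add: v0_def)
  have "ind ord R = sng (ev j) 1 * ind ord P"
    by (rule poly_mapping_eqI) (simp add: iR iP lk_evmult c'_def c1_def c2_def)
  moreover have "dop_embed R \<in> rat_left_ideal G"
    unfolding R_def by (intro E_add E_dl E_cm e)
  ultimately show ?thesis by blast
qed

theorem mainTheorem9:
  fixes G :: "('v::{finite,linorder}, ('v, 'k::field_char_0) mpoly) dop set"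
    and ord :: "'v mon \<Rightarrow> 'v mon \<Rightarrow> bool"
  assumes "graded_term_order ord"
    and "finite G"
  shows "is_ideal {ind ord P | P. dop_embed P \<in> rat_left_ideal G}"
proof -
  note g = assms(1)
  let ?I = "{ind ord P | P. dop_embed P \<in> rat_left_ideal G}"
  have z: "0 \<in> ?I"
    by (rule CollectI, rule exI[of _ 0]) (simp add: L_zero)
  have add: "a + b \<in> ?I" if A: "a \<in> ?I" and B: "b \<in> ?I" for a b
  proof -
    obtain P1 where p1: "a = ind ord P1" "dop_embed P1 \<in> rat_left_ideal G" using A by blast
    obtain P2 where p2: "b = ind ord P2" "dop_embed P2 \<in> rat_left_ideal G" using B by blast
    obtain R where R: "dop_embed R \<in> rat_left_ideal G" "ind ord R = ind ord P1 + ind ord P2"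
      using I_add[OF g p1(2) p2(2)] by blast
    show ?thesis by (rule CollectI, rule exI[of _ R]) (simp add: R p1 p2)
  qed
  have scal: "sng 0 k * a \<in> ?I" if A: "a \<in> ?I" for a k
  proof -
    obtain P where "a = ind ord P" "dop_embed P \<in> rat_left_ideal G" using A by blast
    moreover obtain R where R: "dop_embed R \<in> rat_left_ideal G" "ind ord R = sng 0 k * ind ord P"
      using I_scale[OF g calculation(2), of k] by blast
    ultimately show ?thesis by (intro CollectI exI[of _ R]) simp
  qed
  have evm: "sng (ev j) 1 * a \<in> ?I" if A: "a \<in> ?I" for a j
  proof -
    obtain P where "a = ind ord P" "dop_embed P \<in> rat_left_ideal G" using A by blast
    moreover obtain R where R: "dop_embed R \<in> rat_left_ideal G" "ind ord R = sng (ev j) 1 * ind ord P"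
      using I_ev[OF g calculation(2), of j] by blast
    ultimately show ?thesis by (intro CollectI exI[of _ R]) simp
  qed
  have mon: "\<forall>a\<in>?I. sng w 1 * a \<in> ?I" for w
  proof (induction w rule: mon_induct)
    case 1 then show ?case by simp
  next
    case (2 u j)
    show ?case
    proof
      fix a assume "a \<in> ?I"
      then have "sng u 1 * a \<in> ?I" using 2 by blast
      then have "sng (ev j) 1 * (sng u 1 * a) \<in> ?I" by (rule evm)
      moreover have "sng (ev j) 1 * (sng u 1 * a) = sng (u + ev j) 1 * a"
        by (simp add: mult.assoc[symmetric] mult_single add.commute)
      ultimately show "sng (u + ev j) 1 * a \<in> ?I" by simp
    qed
  qed
  have mult: "r * a \<in> ?I" if a: "a \<in> ?I" for r a
  proof -
    have "r * a = (\<Sum>w\<in>ks r. sng w (lk r w)) * a"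
      by (subst (1) pm_sum_single[of r]) simp
    also have "\<dots> = (\<Sum>w\<in>ks r. sng 0 (lk r w) * (sng w 1 * a))"
      by (simp add: sum_distrib_right mult.assoc[symmetric] mult_single)
    finally have e: "r * a = (\<Sum>w\<in>ks r. sng 0 (lk r w) * (sng w 1 * a))" .
    have "(\<Sum>w\<in>W. sng 0 (lk r w) * (sng w 1 * a)) \<in> ?I" if "finite W" for W
      using that
    proof (induction W rule: finite_induct)
      case empty then show ?case using z by simp
    next
      case (insert x F)
      have "sng 0 (lk r x) * (sng x 1 * a) \<in> ?I" using mon a by (intro scal) blast
      then show ?case using insert add by simp
    qed
    then show ?thesis unfolding e by simp
  qed
  show ?thesis unfolding is_ideal_def using z add mult by blast
qed


end
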